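(* Let $\varphi\in A_\infty(\Omega)$ be a Musielak–Orlicz function of uniformly lower type $p_\varphi^-$ and uniformly upper type $p_\varphi^+$ with $q(\varphi)<p_\varphi^-\le p_\varphi^+<\infty$. Then the Doob maximal operator $M$ is bounded on $L^\varphi(\Omega)$; moreover there is $C>0$ such that for all $f\in L^\varphi(\Omega)$, $$\int_\Omega\varphi(x,M(f)(x))\,d\mathbb P(x)\le C\int_\Omega\varphi(x,|f(x)|)\,d\mathbb P(x).$$
   Context: Let $(\Omega,\mathcal F,\mathbb P)$ be a probability space, $(\mathcal F_n)_{n\in\mathbb Z_+}$ a nondecreasing sequence of sub-$\sigma$-algebras of $\mathcal F$, $\mathbb E_n$ the conditional expectation w.r.t. $\mathcal F_n$, and $M(f):=\sup_{n\in\mathbb Z_+}|\mathbb E_n f|$ the Doob maximal operator. A Musielak–Orlicz function is $\varphi:\Omega\times[0,\infty)\to[0,\infty)$ with $\varphi(x,\cdot)$ nondecreasing, $\varphi(x,0)=0$, $\lim_{t\to\infty}\varphi(x,t)=\infty$ for each $x$ and $\varphi(\cdot,t)$ measurable (assumed positive and integrable) for each $t$. $L^\varphi(\Omega)$ is the space of measurable $f$ with $\|f\|_{L^\varphi(\Omega)}:=\inf\{\lambda>0:\int_\Omega\varphi(x,|f(x)|/\lambda)\,d\mathbb P\le1\}<\infty$. $\varphi$ is of uniformly lower (resp. upper) type $p$ if there is $C>0$ with $\varphi(x,st)\le Cs^p\varphi(x,t)$ for all $x$, $t\ge0$, $s\in(0,1)$ (resp. $s\ge1$). For $q>1$, $\varphi\in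 A_q(\Omega)$ if there is $K$ with $\sup_{t>0}\mathbb E_n(\varphi(\cdot,t))[\mathbb E_n(\varphi(\cdot,t)^{-1/(q-1)})]^{q-1}\le K$ a.e. for all $n$; $\varphi\in A_1(\Omega)$ if $\sup_{t>0}\mathbb E_n(\varphi(\cdot,t))/\varphi(\cdot,t)\le K$ a.e. for all $n$; $A_\infty(\Omega)=\bigcup_{q\ge1}A_q(\Omega)$; $q(\varphi):=\inf\{q\in[1,\infty):\varphi\in A_q(\Omega)\}$. *)

theory Defs
  imports "HOL-Probability.Probability"
begin

text \<open>Conditional expectations of
  nonnegative (possibly non-integrable) functions are taken in the extended
  sense via \<open>nn_cond_exp\<close>.\<close>

text \<open>Real power on extended nonnegative reals (exponent \<open>r > 0\<close> intended).\<close>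
definition enn_powr :: "ennreal \<Rightarrow> real \<Rightarrow> ennreal" where
  "enn_powr a r = (if a = \<infinity> then \<infinity> else ennreal (enn2real a powr r))"

definition MO_function :: "'a measure \<Rightarrow> ('a \<Rightarrow> real \<Rightarrow> real) \<Rightarrow> bool" where
  "MO_function M \<phi> \<longleftrightarrow>
     (\<forall>x\<in>space M. mono_on {0..} (\<phi> x) \<and> \<phi> x 0 = 0
                    \<and> (\<forall>t\<ge>0. \<phi> x t \<ge> 0) \<and> (\<forall>t>0. \<phi> x t > 0)
                    \<and> filterlim (\<phi> x) at_top at_top)
   \<and> (\<forall>t\<ge>0. (\<lambda>x. \<phi> x t) \<in> borel_measurable M \<and> integrable M (\<lambda>x. \<phi> x t))"

definition uniformly_lower_type :: "'a measure \<Rightarrow> ('a \<Rightarrow> real \<Rightarrow> real) \<Rightarrow> real \<Rightarrow> bool" where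
  "uniformly_lower_type M \<phi> p \<longleftrightarrow>
     (\<exists>C>0. \<forall>x\<in>space M. \<forall>t\<ge>0. \<forall>s. 0 < s \<and> s < 1 \<longrightarrow> \<phi> x (s * t) \<le> C * s powr p * \<phi> x t)"

definition uniformly_upper_type :: "'a measure \<Rightarrow> ('a \<Rightarrow> real \<Rightarrow> real) \<Rightarrow> real \<Rightarrow> bool" where
  "uniformly_upper_type M \<phi> p \<longleftrightarrow>
     (\<exists>C>0. \<forall>x\<in>space M. \<forall>t\<ge>0. \<forall>s\<ge>1. \<phi> x (s * t) \<le> C * s powr p * \<phi> x t)"

definition mart_Aq :: "'a measure \<Rightarrow> (nat \<Rightarrow> 'a measure) \<Rightarrow> real \<Rightarrow> ('a \<Rightarrow> real \<Rightarrow> real) \<Rightarrow> bool" where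
  "mart_Aq M F q \<phi> \<longleftrightarrow>
    (if q = 1 then
       (\<exists>K. \<forall>n. \<forall>t>0. AE x in M.
          nn_cond_exp M (F n) (\<lambda>y. ennreal (\<phi> y t)) x \<le> ennreal K * ennreal (\<phi> x t))
     else q > 1 \<and>
       (\<exists>K. \<forall>n. \<forall>t>0. AE x in M.
          nn_cond_exp M (F n) (\<lambda>y. ennreal (\<phi> y t)) x
          * enn_powr (nn_cond_exp M (F n) (\<lambda>y. ennreal (\<phi> y t powr (- 1 / (q - 1)))) x) (q - 1)
          \<le> ennreal K))"

definition mart_Ainf :: "'a measure \<Rightarrow> (nat \<Rightarrow> 'a measure) \<Rightarrow> ('a \<Rightarrow> real \<Rightarrow> real) \<Rightarrow> bool" where
  "mart_Ainf M F \<phi> \<longleftrightarrow> (\<exists>q\<ge>1. mart_Aq M F q \<phi>)"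

definition q_index :: "'a measure \<Rightarrow> (nat \<Rightarrow> 'a measure) \<Rightarrow> ('a \<Rightarrow> real \<Rightarrow> real) \<Rightarrow> real" where
  "q_index M F \<phi> = Inf {q. q \<ge> 1 \<and> mart_Aq M F q \<phi>}"

definition MO_modular :: "'a measure \<Rightarrow> ('a \<Rightarrow> real \<Rightarrow> real) \<Rightarrow> ('a \<Rightarrow> real) \<Rightarrow> ennreal" where
  "MO_modular M \<phi> f = (\<integral>\<^sup>+ x. ennreal (\<phi> x \<bar>f x\<bar>) \<partial>M)"

definition in_L_phi :: "'a measure \<Rightarrow> ('a \<Rightarrow> real \<Rightarrow> real) \<Rightarrow> ('a \<Rightarrow> real) \<Rightarrow> bool" where
  "in_L_phi M \<phi> f \<longleftrightarrow> f \<in> borel_measurable M \<and>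
     (\<exists>c>0. MO_modular M \<phi> (\<lambda>x. f x / c) \<le> 1)"

definition L_phi_norm :: "'a measure \<Rightarrow> ('a \<Rightarrow> real \<Rightarrow> real) \<Rightarrow> ('a \<Rightarrow> real) \<Rightarrow> real" where
  "L_phi_norm M \<phi> f = Inf {c. c > 0 \<and> MO_modular M \<phi> (\<lambda>x. f x / c) \<le> 1}"

definition doob_max :: "'a measure \<Rightarrow> (nat \<Rightarrow> 'a measure) \<Rightarrow> ('a \<Rightarrow> real) \<Rightarrow> 'a \<Rightarrow> ennreal" where
  "doob_max M F f x = (SUP n. ennreal \<bar>real_cond_exp M (F n) f x\<bar>)"

definition phi_ext :: "('a \<Rightarrow> real \<Rightarrow> real) \<Rightarrow> 'a \<Rightarrow> ennreal \<Rightarrow> ennreal" where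
  "phi_ext \<phi> x s = (if s = \<infinity> then \<infinity> else ennreal (\<phi> x (enn2real s)))"

end

theory Submission
  imports Defs
begin

locale filt =
  fixes M :: "'a measure" and F :: "nat \<Rightarrow> 'a measure"
  assumes ps: "prob_space M"
    and sub: "\<And>n. subalgebra M (F n)"
    and nest: "\<And>m n. m \<le> n \<Longrightarrow> sets (F m) \<subseteq> sets (F n)"
begin

lemma sfs: "sigma_finite_subalgebra M (F n)"
proof -
  interpret prob_space M by (rule ps)
  have "finite_measure_subalgebra M (F n)"
    by unfold_locales (rule sub)
  then show ?thesis by (rule finite_measure_subalgebra_is_sigma_finite)
qed

lemma sub_nest: "m \<le> n \<Longrightarrow> subalgebra (F n) (F m)"
  using nest sub unfolding subalgebra_def by auto

lemma meas_nest: "m \<le> n \<Longrightarrow> f \<in> borel_measurable (F m) \<Longrightarrow> f \<in> borel_measurable (F n)"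
  using measurable_from_subalg[OF sub_nest] by blast

lemma sets_F: "A \<in> sets (F n) \<Longrightarrow> A \<in> sets M"
  using sub unfolding subalgebra_def by auto

lemma space_F: "space (F n) = space M"
  using sub unfolding subalgebra_def by auto

lemma E_intg:
  assumes "f \<in> borel_measurable (F n)" "g \<in> borel_measurable M"
  shows "(\<integral>\<^sup>+ x. f x * nn_cond_exp M (F n) g x \<partial>M) = (\<integral>\<^sup>+ x. f x * g x \<partial>M)"
  by (rule sigma_finite_subalgebra.nn_cond_exp_intg[OF sfs assms])

lemma E_prod:
  assumes "f \<in> borel_measurable (F n)" "g \<in> borel_measurable M"
  shows "AE x in M. f x * nn_cond_exp M (F n) g x = nn_cond_exp M (F n) (\<lambda>x. f x * g x) x"
  by (rule sigma_finite_subalgebra.nn_cond_exp_prod[OF sfs assms])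

lemma E_sum:
  assumes "f \<in> borel_measurable M" "g \<in> borel_measurable M"
  shows "AE x in M. nn_cond_exp M (F n) f x + nn_cond_exp M (F n) g x = nn_cond_exp M (F n) (\<lambda>x. f x + g x) x"
  by (rule sigma_finite_subalgebra.nn_cond_exp_sum[OF sfs assms])

lemma E_mono:
  assumes "AE x in M. f x \<le> g x" "f \<in> borel_measurable M" "g \<in> borel_measurable M"
  shows "AE x in M. nn_cond_exp M (F n) f x \<le> nn_cond_exp M (F n) g x"
  by (rule sigma_finite_subalgebra.nn_cond_exp_mono[OF sfs assms])

lemma E_Fmeas:
  assumes "f \<in> borel_measurable (F n)"
  shows "AE x in M. f x = nn_cond_exp M (F n) f x"
  by (rule sigma_finite_subalgebra.nn_cond_exp_F_meas[OF sfs assms])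

lemma E_const: "AE x in M. nn_cond_exp M (F n) (\<lambda>_. c) x = c"
  using E_Fmeas[of "\<lambda>_. c" n] by auto

lemma E_pos:
  assumes v: "v \<in> borel_measurable M" and pos: "\<And>x. x \<in> space M \<Longrightarrow> v x > 0"
  shows "AE x in M. nn_cond_exp M (F n) v x > 0"
proof -
  define A where "A = {x\<in>space M. nn_cond_exp M (F n) v x = 0}"
  have AF: "A \<in> sets (F n)" 
  proof -
    have "{x\<in>space (F n). nn_cond_exp M (F n) v x = 0} \<in> sets (F n)"
      by (rule borel_measurable_eq[OF borel_measurable_nn_cond_exp borel_measurable_const])
    then show ?thesis unfolding A_def space_F .
  qed
  have "(\<integral>\<^sup>+ x. indicator A x * v x \<partial>M) = (\<integral>\<^sup>+ x. indicator A x * nn_cond_exp M (F n) v x \<partial>M)"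
    by (rule E_intg[OF borel_measurable_indicator[OF AF] v, symmetric])
  also have "\<dots> = 0"
    by (intro nn_integral_zero' AE_I2) (simp add: A_def indicator_def)
  finally have "AE x in M. indicator A x * v x = 0"
  proof (subst nn_integral_0_iff_AE[symmetric])
    have [measurable]: "A \<in> sets M" using sets_F[OF AF] .
    show "(\<lambda>x. indicator A x * v x) \<in> borel_measurable M" using v by measurable
  qed
  then show ?thesis
  proof (rule AE_mp[OF _ AE_I2])
    fix x assume x: "x \<in> space M"
    show "indicator A x * v x = 0 \<longrightarrow> 0 < nn_cond_exp M (F n) v x"
    proof
    assume h: "indicator A x * v x = 0"
    have "x \<notin> A" using h pos[OF x] by (auto simp: indicator_def split: if_splits)
    then have "nn_cond_exp M (F n) v x \<noteq> 0" using x by (simp add: A_def)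
    then show "0 < nn_cond_exp M (F n) v x" by (simp add: zero_less_iff_neq_zero)
    qed
  qed
qed

end

lemma young_aux:
  fixes h w c q :: real
  assumes h: "h \<ge> 0" and w: "w > 0" and c: "c > 0" and q: "q > 1"
  shows "h \<le> c powr (1 - q) * (h powr q * w) + c * w powr (- 1 / (q - 1))"
proof (cases "h \<le> c * w powr (- 1 / (q - 1))")
  case True
  have "0 \<le> c powr (1 - q) * (h powr q * w)" using w by simp
  then show ?thesis using True by linarith
next
  case False
  then have hc: "h / c > w powr (- 1 / (q - 1))" using c by (simp add: field_simps)
  have hpos: "h > 0" using False c w by (smt (verit) mult_pos_pos powr_gt_zero)
  have "(w powr (- 1 / (q - 1))) powr (q - 1) < (h / c) powr (q - 1)"
    using hc q by (intro powr_less_mono2) auto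
  moreover have "(w powr (- 1 / (q - 1))) powr (q - 1) = 1 / w"
  proof -
    have "(w powr (- 1 / (q - 1))) powr (q - 1) = w powr ((- 1 / (q - 1)) * (q - 1))"
      by (rule powr_powr)
    also have "\<dots> = w powr (- 1)" using q by simp
    also have "\<dots> = 1 / w" using w by (simp add: powr_minus divide_inverse)
    finally show ?thesis .
  qed
  ultimately have "1 / w < (h / c) powr (q - 1)" by simp
  then have A: "1 < w * (h / c) powr (q - 1)" using w by (simp add: field_simps)
  have "c powr (1 - q) * (h powr q * w) = h * (w * (h / c) powr (q - 1))"
  proof -
    have "h powr q = h * h powr (q - 1)" using hpos by (simp add: powr_diff)
    moreover have "(h / c) powr (q - 1) = h powr (q - 1) * c powr (1 - q)"
    proof -
      have "c powr (1 - q) = 1 / c powr (q - 1)"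
        using c by (metis minus_diff_eq powr_minus_divide)
      then show ?thesis using hpos c by (simp add: powr_divide)
    qed
    ultimately show ?thesis by (simp add: algebra_simps)
  qed
  also have "\<dots> > h" using A hpos by simp
  finally show ?thesis using c w by (smt (verit) mult_nonneg_nonneg powr_ge_zero)
qed

lemma key_real:
  fixes q K lam s u om :: real
  assumes q: "q > 1" and K: "K > 0" and lam: "lam > 0" and s: "s > 0" and u: "u \<ge> 0" and om: "om \<ge> 0"
    and omK: "om * s powr (q - 1) \<le> K"
    and H: "lam < (lam / (2 * s)) powr (1 - q) * u + lam / 2"
  shows "om \<le> 2 powr q * K / lam powr q * u"
proof -
  define c where "c = lam / (2 * s)"
  have c: "c > 0" using lam s by (simp add: c_def)
  have cc: "c powr (1 - q) * c powr (q - 1) = 1"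
    using c by (simp add: powr_add[symmetric])
  have "lam / 2 < c powr (1 - q) * u" using H by (simp add: c_def)
  then have "lam / 2 * c powr (q - 1) < c powr (1 - q) * u * c powr (q - 1)"
    using c by (intro mult_strict_right_mono) auto
  also have "\<dots> = u" using cc by (simp add: algebra_simps)
  finally have u1: "lam / 2 * c powr (q - 1) < u" .
  have "c powr (q - 1) = (lam / 2) powr (q - 1) / s powr (q - 1)"
    using lam s by (simp add: c_def powr_divide powr_mult)
  moreover have "lam / 2 * (lam / 2) powr (q - 1) = (lam / 2) powr q"
    using lam by (simp add: powr_diff)
  ultimately have "lam / 2 * c powr (q - 1) = (lam / 2) powr q / s powr (q - 1)"
    by (simp add: field_simps)
  moreover have "(lam / 2) powr q = lam powr q / 2 powr q" using lam by (simp add: powr_divide)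
  ultimately have u2: "lam powr q / 2 powr q / s powr (q - 1) < u" using u1 by simp
  have sp: "s powr (q - 1) > 0" using s by simp
  have "om \<le> K / s powr (q - 1)" using omK sp by (simp add: field_simps)
  also have "\<dots> = 2 powr q * K / lam powr q * (lam powr q / 2 powr q / s powr (q - 1))"
    using lam by (simp add: field_simps)
  also have "\<dots> \<le> 2 powr q * K / lam powr q * u"
    using u2 K lam by (intro mult_left_mono) auto
  finally show ?thesis .
qed

lemma key_pt:
  fixes Wv sv Uv Hv :: ennreal and q K lam :: real
  assumes q: "q > 1" and K: "K > 0" and lam: "lam > 0" and Wv: "Wv > 0" and sv: "sv > 0"
    and Aq: "Wv * enn_powr sv (q - 1) \<le> ennreal K"
    and H: "Hv \<le> ennreal (c powr (1 - q)) * Uv + ennreal c * sv"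
    and c: "c = (if sv \<noteq> 0 \<and> sv \<noteq> \<infinity> then lam / (2 * enn2real sv) else 1)"
    and lH: "ennreal lam < Hv"
  shows "Wv \<le> ennreal (2 powr q * K / lam powr q) * Uv"
proof -
  have svt: "sv \<noteq> \<infinity>"
  proof
    assume "sv = \<infinity>"
    then have "Wv * enn_powr sv (q - 1) = \<infinity>" using Wv by (simp add: enn_powr_def ennreal_mult_eq_top_iff)
    then show False using Aq ennreal_less_top[of K] unfolding infinity_ennreal_def by (metis leD)
  qed
  define s where "s = enn2real sv"
  have svt': "sv < \<top>" using svt by (simp add: less_top[symmetric])
  have s: "sv = ennreal s" "s > 0"
    using sv svt' by (simp_all add: s_def enn2real_positive_iff)
  have cs: "c = lam / (2 * s)" using c s by simp
  have ep: "enn_powr sv (q - 1) = ennreal (s powr (q - 1))" using s by (simp add: enn_powr_def)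
  have sp: "s powr (q - 1) > 0" using s by simp
  have Wt: "Wv \<noteq> \<infinity>"
  proof
    assume "Wv = \<infinity>"
    then have "Wv * enn_powr sv (q - 1) = \<infinity>" using ep sp by (simp add: ennreal_mult_eq_top_iff)
    then show False using Aq ennreal_less_top[of K] unfolding infinity_ennreal_def by (metis leD)
  qed
  obtain om where om: "Wv = ennreal om" "om \<ge> 0" using Wt by (cases Wv rule: ennreal_cases) auto
  have omK: "om * s powr (q - 1) \<le> K"
    using Aq om ep sp K by (simp add: ennreal_mult'' [symmetric] ennreal_le_iff)
  have cs2: "ennreal c * sv = ennreal (lam / 2)"
    using cs s lam by (simp add: ennreal_mult''[symmetric])
  have CK: "2 powr q * K / lam powr q > 0" using K lam by simp
  show ?thesis
  proof (cases "Uv = \<infinity>")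
    case True
    then show ?thesis using CK K lam by (simp add: ennreal_mult_top)
  next
    case False
    then obtain u where u: "Uv = ennreal u" "u \<ge> 0" by (cases Uv rule: ennreal_cases) auto
    have "ennreal lam < ennreal (c powr (1 - q) * u + lam / 2)"
    proof -
      have "ennreal (c powr (1 - q)) * Uv + ennreal c * sv = ennreal (c powr (1 - q)) * ennreal u + ennreal (lam / 2)"
        using u cs2 by simp
      also have "\<dots> = ennreal (c powr (1 - q) * u + lam / 2)"
        using u lam by (simp add: ennreal_mult ennreal_plus)
      finally show ?thesis using lH H by simp
    qed
    then have "lam < c powr (1 - q) * u + lam / 2" using lam by (subst (asm) ennreal_less_iff) auto
    then have "om \<le> 2 powr q * K / lam powr q * u"
      using key_real[OF q K lam s(2) u(2) om(2) omK] cs by simp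
    then have "ennreal om \<le> ennreal (2 powr q * K / lam powr q * u)" by (rule ennreal_leI)
    also have "\<dots> = ennreal (2 powr q * K / lam powr q) * ennreal u"
      using CK u by (intro ennreal_mult) auto
    finally show ?thesis using om u by simp
  qed
qed

lemma key1_pt:
  fixes W H U :: ennreal and K lam :: real
  assumes K: "K > 0" and lam: "lam > 0" and lH: "ennreal lam < H" and WH: "W * H \<le> ennreal K * U"
  shows "W \<le> ennreal (2 powr 1 * K / lam powr 1) * U"
proof -
  have "ennreal lam * W \<le> H * W" using lH by (intro mult_right_mono) auto
  also have "\<dots> \<le> ennreal K * U" using WH by (simp add: mult.commute)
  finally have a: "ennreal lam * W \<le> ennreal K * U" .
  have "W = ennreal (1 / lam) * (ennreal lam * W)"
  proof -
    have "ennreal (1 / lam) * ennreal lam = 1" using lam by (simp add: ennreal_mult[symmetric])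
    then show ?thesis by (simp add: mult.assoc[symmetric])
  qed
  also have "\<dots> \<le> ennreal (1 / lam) * (ennreal K * U)" using a by (rule mult_left_mono) simp
  also have "\<dots> = ennreal (K / lam) * U"
    using lam K by (simp add: ennreal_mult[symmetric] mult.assoc[symmetric])
  also have "\<dots> \<le> ennreal (2 powr 1 * K / lam powr 1) * U"
    using lam K by (intro mult_right_mono ennreal_leI) (auto simp: field_simps)
  finally show ?thesis .
qed

context filt begin

lemma key_1:
  fixes w h :: "'a \<Rightarrow> real" and K lam :: real
  assumes K: "K > 0" and lam: "lam > 0"
    and wm[measurable]: "w \<in> borel_measurable M" and wpos: "\<And>x. x \<in> space M \<Longrightarrow> w x > 0"
    and hm[measurable]: "h \<in> borel_measurable M" and hpos: "\<And>x. x \<in> space M \<Longrightarrow> h x \<ge> 0"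
    and A1: "AE x in M. nn_cond_exp M (F n) (\<lambda>y. ennreal (w y)) x \<le> ennreal K * ennreal (w x)"
  shows "AE x in M. ennreal lam < nn_cond_exp M (F n) (\<lambda>y. ennreal (h y)) x \<longrightarrow>
     nn_cond_exp M (F n) (\<lambda>y. ennreal (w y)) x
       \<le> ennreal (2 powr 1 * K / lam powr 1) * nn_cond_exp M (F n) (\<lambda>y. ennreal (h y powr 1 * w y)) x"
proof -
  define W where "W = nn_cond_exp M (F n) (\<lambda>y. ennreal (w y))"
  have Wm[measurable]: "W \<in> borel_measurable (F n)" unfolding W_def by (rule borel_measurable_nn_cond_exp)
  have WmM[measurable]: "W \<in> borel_measurable M" by (rule measurable_from_subalg[OF sub Wm])
  have a: "AE x in M. W x * nn_cond_exp M (F n) (\<lambda>y. ennreal (h y)) x = nn_cond_exp M (F n) (\<lambda>y. W y * ennreal (h y)) x"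
    by (rule E_prod) measurable
  have b0: "AE y in M. W y * ennreal (h y) \<le> ennreal K * ennreal (h y powr 1 * w y)"
    using A1 AE_space
  proof eventually_elim
    case (elim y)
    have "W y * ennreal (h y) \<le> ennreal K * ennreal (w y) * ennreal (h y)"
      using elim(1) unfolding W_def by (rule mult_right_mono) simp
    also have "\<dots> = ennreal K * ennreal (h y powr 1 * w y)"
    proof -
      have hy: "h y \<ge> 0" "w y > 0" using elim(2) hpos wpos by auto
      then have "h y powr 1 = h y" by (simp add: powr_one)
      moreover have "ennreal (h y * w y) = ennreal (h y) * ennreal (w y)"
        using hy by (intro ennreal_mult) auto
      ultimately show ?thesis by (simp add: ac_simps)
    qed
    finally show ?case .
  qed
  have b: "AE x in M. nn_cond_exp M (F n) (\<lambda>y. W y * ennreal (h y)) x \<le> nn_cond_exp M (F n) (\<lambda>y. ennreal K * ennreal (h y powr 1 * w y)) x"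
    by (rule E_mono[OF b0]) measurable
  have c: "AE x in M. ennreal K * nn_cond_exp M (F n) (\<lambda>y. ennreal (h y powr 1 * w y)) x = nn_cond_exp M (F n) (\<lambda>y. ennreal K * ennreal (h y powr 1 * w y)) x"
    by (rule E_prod) measurable
  show ?thesis using a b c
  proof eventually_elim
    case (elim x)
    show ?case
    proof
      assume lH: "ennreal lam < nn_cond_exp M (F n) (\<lambda>y. ennreal (h y)) x"
      show "nn_cond_exp M (F n) (\<lambda>y. ennreal (w y)) x
       \<le> ennreal (2 powr 1 * K / lam powr 1) * nn_cond_exp M (F n) (\<lambda>y. ennreal (h y powr 1 * w y)) x"
        unfolding W_def[symmetric]
      proof (rule key1_pt[OF K lam lH])
        show "W x * nn_cond_exp M (F n) (\<lambda>y. ennreal (h y)) x \<le> ennreal K * nn_cond_exp M (F n) (\<lambda>y. ennreal (h y powr 1 * w y)) x"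
          using elim by simp
      qed
    qed
  qed
qed

lemma key_q:
  fixes w h :: "'a \<Rightarrow> real" and q K lam :: real
  assumes q: "q > 1" and K: "K > 0" and lam: "lam > 0"
    and wm[measurable]: "w \<in> borel_measurable M" and wpos: "\<And>x. x \<in> space M \<Longrightarrow> w x > 0"
    and hm[measurable]: "h \<in> borel_measurable M" and hpos: "\<And>x. x \<in> space M \<Longrightarrow> h x \<ge> 0"
    and Aq: "AE x in M. nn_cond_exp M (F n) (\<lambda>y. ennreal (w y)) x
              * enn_powr (nn_cond_exp M (F n) (\<lambda>y. ennreal (w y powr (- 1 / (q - 1)))) x) (q - 1) \<le> ennreal K"
  shows "AE x in M. ennreal lam < nn_cond_exp M (F n) (\<lambda>y. ennreal (h y)) x \<longrightarrow>
     nn_cond_exp M (F n) (\<lambda>y. ennreal (w y)) x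
       \<le> ennreal (2 powr q * K / lam powr q) * nn_cond_exp M (F n) (\<lambda>y. ennreal (h y powr q * w y)) x"
proof -
  define sg where "sg = nn_cond_exp M (F n) (\<lambda>y. ennreal (w y powr (- 1 / (q - 1))))"
  define c where "c y = (if sg y \<noteq> 0 \<and> sg y \<noteq> \<infinity> then lam / (2 * enn2real (sg y)) else 1)" for y
  have sgm[measurable]: "sg \<in> borel_measurable (F n)" unfolding sg_def by (rule borel_measurable_nn_cond_exp)
  have cm[measurable]: "c \<in> borel_measurable (F n)" unfolding c_def by measurable
  have cmM[measurable]: "c \<in> borel_measurable M" by (rule measurable_from_subalg[OF sub cm])
  have cpos: "c y > 0" for y
  proof (cases "sg y \<noteq> 0 \<and> sg y \<noteq> \<infinity>")
    case True
    then have "enn2real (sg y) > 0" by (simp add: enn2real_positive_iff less_top[symmetric] zero_less_iff_neq_zero)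
    then show ?thesis using True lam by (simp add: c_def)
  next
    case False
    then show ?thesis unfolding c_def by (simp only: if_False)
  qed
  define g1 where "g1 y = ennreal (c y powr (1 - q)) * ennreal (h y powr q * w y)" for y
  define g2 where "g2 y = ennreal (c y) * ennreal (w y powr (- 1 / (q - 1)))" for y
  have g1m[measurable]: "g1 \<in> borel_measurable M" unfolding g1_def by measurable
  have g2m[measurable]: "g2 \<in> borel_measurable M" unfolding g2_def by measurable
  have pt: "ennreal (h y) \<le> g1 y + g2 y" if y: "y \<in> space M" for y
  proof -
    have "h y \<le> c y powr (1 - q) * (h y powr q * w y) + c y * w y powr (- 1 / (q - 1))"
      by (rule young_aux[OF hpos[OF y] wpos[OF y] cpos q])
    then have "ennreal (h y) \<le> ennreal (c y powr (1 - q) * (h y powr q * w y) + c y * w y powr (- 1 / (q - 1)))"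
      by (rule ennreal_leI)
    also have "\<dots> = g1 y + g2 y"
      unfolding g1_def g2_def using cpos[of y] hpos[OF y] wpos[OF y]
      by (simp add: ennreal_plus ennreal_mult)
    finally show ?thesis .
  qed
  have 1: "AE x in M. nn_cond_exp M (F n) (\<lambda>y. ennreal (h y)) x \<le> nn_cond_exp M (F n) (\<lambda>y. g1 y + g2 y) x"
    by (rule E_mono[OF AE_I2[OF pt]]) measurable
  have 2: "AE x in M. nn_cond_exp M (F n) g1 x + nn_cond_exp M (F n) g2 x = nn_cond_exp M (F n) (\<lambda>y. g1 y + g2 y) x"
    by (rule E_sum) measurable
  have 3: "AE x in M. ennreal (c x powr (1 - q)) * nn_cond_exp M (F n) (\<lambda>y. ennreal (h y powr q * w y)) x
        = nn_cond_exp M (F n) g1 x"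
    unfolding g1_def by (rule E_prod) measurable
  have 4: "AE x in M. ennreal (c x) * sg x = nn_cond_exp M (F n) g2 x"
    unfolding g2_def sg_def by (rule E_prod) measurable
  have 5: "AE x in M. nn_cond_exp M (F n) (\<lambda>y. ennreal (w y)) x > 0"
  proof (rule E_pos)
    fix x assume "x \<in> space M"
    then have "w x > 0" by (rule wpos)
    then show "0 < ennreal (w x)" by simp
  qed simp
  have 6: "AE x in M. sg x > 0"
    unfolding sg_def
  proof (rule E_pos)
    fix x assume "x \<in> space M"
    then have "w x > 0" by (rule wpos)
    then show "0 < ennreal (w x powr (- 1 / (q - 1)))" by simp
  qed simp
  show ?thesis
    using 1 2 3 4 5 6 Aq
  proof eventually_elim
    case (elim x)
    show ?case
    proof
      assume lH: "ennreal lam < nn_cond_exp M (F n) (\<lambda>y. ennreal (h y)) x"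
      show "nn_cond_exp M (F n) (\<lambda>y. ennreal (w y)) x
       \<le> ennreal (2 powr q * K / lam powr q) * nn_cond_exp M (F n) (\<lambda>y. ennreal (h y powr q * w y)) x"
      proof (rule key_pt[OF q K lam elim(5) elim(6)])
        show "nn_cond_exp M (F n) (\<lambda>y. ennreal (w y)) x * enn_powr (sg x) (q - 1) \<le> ennreal K"
          using elim(7) by (simp add: sg_def)
        show "nn_cond_exp M (F n) (\<lambda>y. ennreal (h y)) x \<le>
           ennreal (c x powr (1 - q)) * nn_cond_exp M (F n) (\<lambda>y. ennreal (h y powr q * w y)) x + ennreal (c x) * sg x"
          using elim(1,2,3,4) by simp
        show "c x = (if sg x \<noteq> 0 \<and> sg x \<noteq> \<infinity> then lam / (2 * enn2real (sg x)) else 1)"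
          by (simp add: c_def)
      qed (rule lH)
    qed
  qed
qed

end

context filt begin

lemma weak:
  fixes w h g :: "'a \<Rightarrow> ennreal" and C lam :: ennreal
  assumes [measurable]: "w \<in> borel_measurable M" "h \<in> borel_measurable M" "g \<in> borel_measurable M"
    and key: "\<And>n. AE x in M. lam < nn_cond_exp M (F n) h x \<longrightarrow> nn_cond_exp M (F n) w x \<le> C * nn_cond_exp M (F n) g x"
  shows "(\<integral>\<^sup>+x. w x * indicator {x\<in>space M. \<exists>n. lam < nn_cond_exp M (F n) h x} x \<partial>M) \<le> C * (\<integral>\<^sup>+x. g x \<partial>M)"
proof -
  define Hn where "Hn n = nn_cond_exp M (F n) h" for n
  define S where "S n = {x\<in>space M. lam < Hn n x}" for n
  define B where "B n = S n - (\<Union>m\<in>{..<n}. S m)" for n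
  have SF: "S m \<in> sets (F n)" if "m \<le> n" for m n
  proof -
    have "{x\<in>space (F m). lam < Hn m x} \<in> sets (F m)"
      unfolding Hn_def by (intro borel_measurable_less borel_measurable_const borel_measurable_nn_cond_exp)
    then have "S m \<in> sets (F m)" unfolding S_def space_F .
    then show ?thesis using nest[OF that] by auto
  qed
  have BF: "B n \<in> sets (F n)" for n
    unfolding B_def by (intro sets.Diff sets.finite_UN SF) auto
  have BM[measurable]: "B n \<in> sets M" for n using sets_F[OF BF] .
  have disj: "disjoint_family B"
    unfolding disjoint_family_on_def B_def
  proof (intro ballI impI)
    fix m n :: nat assume "m \<noteq> n"
    then show "(S m - (\<Union>k\<in>{..<m}. S k)) \<inter> (S n - (\<Union>k\<in>{..<n}. S k)) = {}"
      by (cases "m < n") auto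
  qed
  have UB: "(\<Union>n. B n) = {x\<in>space M. \<exists>n. lam < nn_cond_exp M (F n) h x}"
  proof
    show "(\<Union>n. B n) \<subseteq> {x\<in>space M. \<exists>n. lam < nn_cond_exp M (F n) h x}"
      by (auto simp: B_def S_def Hn_def)
  next
    show "{x\<in>space M. \<exists>n. lam < nn_cond_exp M (F n) h x} \<subseteq> (\<Union>n. B n)"
    proof
      fix x assume "x \<in> {x\<in>space M. \<exists>n. lam < nn_cond_exp M (F n) h x}"
      then have x: "x \<in> space M" and ex: "\<exists>n. x \<in> S n" by (auto simp: S_def Hn_def)
      define n where "n = (LEAST n. x \<in> S n)"
      have "x \<in> S n" unfolding n_def using ex by (rule LeastI_ex)
      moreover have "x \<notin> S m" if "m < n" for m
        using not_less_Least[of m "\<lambda>n. x \<in> S n"] that unfolding n_def by blast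
      ultimately have "x \<in> B n" unfolding B_def by auto
      then show "x \<in> (\<Union>n. B n)" by blast
    qed
  qed
  have step: "(\<integral>\<^sup>+x. w x * indicator (B n) x \<partial>M) \<le> C * (\<integral>\<^sup>+x. g x * indicator (B n) x \<partial>M)" for n
  proof -
    have im[measurable]: "indicator (B n) \<in> borel_measurable (F n)"
      by (rule borel_measurable_indicator[OF BF])
    have "(\<integral>\<^sup>+x. w x * indicator (B n) x \<partial>M) = (\<integral>\<^sup>+x. indicator (B n) x * nn_cond_exp M (F n) w x \<partial>M)"
      by (subst E_intg[OF im]) (simp_all add: mult.commute)
    also have "\<dots> \<le> (\<integral>\<^sup>+x. C * (indicator (B n) x * nn_cond_exp M (F n) g x) \<partial>M)"
    proof (rule nn_integral_mono_AE)
      show "AE x in M. indicator (B n) x * nn_cond_exp M (F n) w x \<le> C * (indicator (B n) x * nn_cond_exp M (F n) g x)"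
        using key[of n]
      proof eventually_elim
        case (elim x)
        show ?case
        proof (cases "x \<in> B n")
          case True
          then have "lam < nn_cond_exp M (F n) h x" by (simp add: B_def S_def Hn_def)
          then show ?thesis using elim True by simp
        qed simp
      qed
    qed
    also have "\<dots> = C * (\<integral>\<^sup>+x. indicator (B n) x * nn_cond_exp M (F n) g x \<partial>M)"
      by (rule nn_integral_cmult) measurable
    also have "\<dots> = C * (\<integral>\<^sup>+x. g x * indicator (B n) x \<partial>M)"
      by (subst E_intg[OF im]) (simp_all add: mult.commute)
    finally show ?thesis .
  qed
  have "(\<integral>\<^sup>+x. w x * indicator {x\<in>space M. \<exists>n. lam < nn_cond_exp M (F n) h x} x \<partial>M)
      = (\<integral>\<^sup>+x. (\<Sum>n. w x * indicator (B n) x) \<partial>M)"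
    unfolding UB[symmetric] by (simp add: suminf_indicator[OF disj] ennreal_suminf_cmult)
  also have "\<dots> = (\<Sum>n. \<integral>\<^sup>+x. w x * indicator (B n) x \<partial>M)"
    by (rule nn_integral_suminf) measurable
  also have "\<dots> \<le> (\<Sum>n. C * (\<integral>\<^sup>+x. g x * indicator (B n) x \<partial>M))"
    by (intro suminf_le step) auto
  also have "\<dots> = C * (\<Sum>n. \<integral>\<^sup>+x. g x * indicator (B n) x \<partial>M)"
    by (simp add: ennreal_suminf_cmult)
  also have "(\<Sum>n. \<integral>\<^sup>+x. g x * indicator (B n) x \<partial>M) = (\<integral>\<^sup>+x. (\<Sum>n. g x * indicator (B n) x) \<partial>M)"
    by (rule nn_integral_suminf[symmetric]) measurable
  also have "\<dots> = (\<integral>\<^sup>+x. g x * indicator (\<Union>n. B n) x \<partial>M)"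
    by (simp add: suminf_indicator[OF disj] ennreal_suminf_cmult)
  also have "\<dots> \<le> (\<integral>\<^sup>+x. g x \<partial>M)"
    by (intro nn_integral_mono) (simp add: indicator_def)
  finally show ?thesis by (simp add: mult_left_mono)
qed

end

context filt begin

lemma weak_phi:
  fixes \<phi> :: "'a \<Rightarrow> real \<Rightarrow> real" and q :: real
  assumes MO: "MO_function M \<phi>" and Aq: "mart_Aq M F q \<phi>" and q: "q \<ge> 1"
  shows "\<exists>K'>0. \<forall>t>0. \<forall>lam>0. \<forall>h. h \<in> borel_measurable M \<and> (\<forall>x\<in>space M. h x \<ge> 0) \<longrightarrow>
    (\<integral>\<^sup>+x. ennreal (\<phi> x t) * indicator {x\<in>space M. \<exists>n. ennreal lam < nn_cond_exp M (F n) (\<lambda>y. ennreal (h y)) x} x \<partial>M)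
      \<le> ennreal (K' / lam powr q) * (\<integral>\<^sup>+x. ennreal (h x powr q * \<phi> x t) \<partial>M)"
proof -
  have wm: "(\<lambda>x. \<phi> x t) \<in> borel_measurable M" if "t > 0" for t
    using MO that unfolding MO_function_def by auto
  have wpos: "\<phi> x t > 0" if "t > 0" "x \<in> space M" for t x
    using MO that unfolding MO_function_def by auto
  obtain K where K: "K > 0" and keyK: "\<And>n t lam h. t > 0 \<Longrightarrow> lam > 0 \<Longrightarrow> h \<in> borel_measurable M \<Longrightarrow>
      (\<And>x. x \<in> space M \<Longrightarrow> h x \<ge> 0) \<Longrightarrow>
      AE x in M. ennreal lam < nn_cond_exp M (F n) (\<lambda>y. ennreal (h y)) x \<longrightarrow>
     nn_cond_exp M (F n) (\<lambda>y. ennreal (\<phi> y t)) x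
       \<le> ennreal (2 powr q * K / lam powr q) * nn_cond_exp M (F n) (\<lambda>y. ennreal (h y powr q * \<phi> y t)) x"
  proof (cases "q = 1")
    case True
    then obtain K0 where K0: "\<And>n (t::real). t > 0 \<Longrightarrow> AE x in M.
          nn_cond_exp M (F n) (\<lambda>y. ennreal (\<phi> y t)) x \<le> ennreal K0 * ennreal (\<phi> x t)"
      using Aq unfolding mart_Aq_def by auto
    define K where "K = max K0 1"
    show ?thesis
    proof (rule that[of K])
      show "K > 0" by (simp add: K_def)
      fix n :: nat and t lam :: real and h :: "'a \<Rightarrow> real"
      assume t: "t > 0" and lam: "lam > 0" and hm: "h \<in> borel_measurable M" and hp: "\<And>x. x \<in> space M \<Longrightarrow> h x \<ge> 0"
      have "AE x in M. nn_cond_exp M (F n) (\<lambda>y. ennreal (\<phi> y t)) x \<le> ennreal K * ennreal (\<phi> x t)"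
        using K0[of t n, OF t]
      proof eventually_elim
        case (elim x)
        also have "ennreal K0 * ennreal (\<phi> x t) \<le> ennreal K * ennreal (\<phi> x t)"
          by (intro mult_right_mono ennreal_leI) (auto simp: K_def)
        finally show ?case .
      qed
      from key_1[OF _ lam wm[OF t] wpos[OF t] hm hp this]
      show "AE x in M. ennreal lam < nn_cond_exp M (F n) (\<lambda>y. ennreal (h y)) x \<longrightarrow>
     nn_cond_exp M (F n) (\<lambda>y. ennreal (\<phi> y t)) x
       \<le> ennreal (2 powr q * K / lam powr q) * nn_cond_exp M (F n) (\<lambda>y. ennreal (h y powr q * \<phi> y t)) x"
        using True by (simp add: K_def)
    qed
  next
    case False
    then have q1: "q > 1" using q by simp
    then obtain K0 where K0: "\<And>n (t::real). t > 0 \<Longrightarrow> AE x in M.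
          nn_cond_exp M (F n) (\<lambda>y. ennreal (\<phi> y t)) x
          * enn_powr (nn_cond_exp M (F n) (\<lambda>y. ennreal (\<phi> y t powr (- 1 / (q - 1)))) x) (q - 1)
          \<le> ennreal K0"
      using Aq False unfolding mart_Aq_def by auto
    define K where "K = max K0 1"
    show ?thesis
    proof (rule that[of K])
      show "K > 0" by (simp add: K_def)
      fix n :: nat and t lam :: real and h :: "'a \<Rightarrow> real"
      assume t: "t > 0" and lam: "lam > 0" and hm: "h \<in> borel_measurable M" and hp: "\<And>x. x \<in> space M \<Longrightarrow> h x \<ge> 0"
      have "AE x in M. nn_cond_exp M (F n) (\<lambda>y. ennreal (\<phi> y t)) x
          * enn_powr (nn_cond_exp M (F n) (\<lambda>y. ennreal (\<phi> y t powr (- 1 / (q - 1)))) x) (q - 1)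
          \<le> ennreal K"
        using K0[of t n, OF t]
      proof eventually_elim
        case (elim x)
        also have "ennreal K0 \<le> ennreal K"
          by (intro ennreal_leI) (auto simp: K_def)
        finally show ?case .
      qed
      from key_q[OF q1 _ lam wm[OF t] wpos[OF t] hm hp this]
      show "AE x in M. ennreal lam < nn_cond_exp M (F n) (\<lambda>y. ennreal (h y)) x \<longrightarrow>
     nn_cond_exp M (F n) (\<lambda>y. ennreal (\<phi> y t)) x
       \<le> ennreal (2 powr q * K / lam powr q) * nn_cond_exp M (F n) (\<lambda>y. ennreal (h y powr q * \<phi> y t)) x"
        by (simp add: K_def)
    qed
  qed
  show ?thesis
  proof (intro exI[of _ "2 powr q * K"] conjI allI impI)
    show "2 powr q * K > 0" using K by simp
    fix t lam :: real and h :: "'a \<Rightarrow> real"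
    assume t: "t > 0" and lam: "lam > 0" and hh: "h \<in> borel_measurable M \<and> (\<forall>x\<in>space M. h x \<ge> 0)"
    have [measurable]: "h \<in> borel_measurable M" using hh by simp
    have [measurable]: "(\<lambda>x. \<phi> x t) \<in> borel_measurable M" using wm[OF t] .
    have "(\<integral>\<^sup>+x. ennreal (\<phi> x t) * indicator {x\<in>space M. \<exists>n. ennreal lam < nn_cond_exp M (F n) (\<lambda>y. ennreal (h y)) x} x \<partial>M)
      \<le> ennreal (2 powr q * K / lam powr q) * (\<integral>\<^sup>+x. ennreal (h x powr q * \<phi> x t) \<partial>M)"
      by (rule weak) (use keyK[OF t lam] hh in auto)
    then show "(\<integral>\<^sup>+x. ennreal (\<phi> x t) * indicator {x\<in>space M. \<exists>n. ennreal lam < nn_cond_exp M (F n) (\<lambda>y. ennreal (h y)) x} x \<partial>M)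
      \<le> ennreal (2 powr q * K / lam powr q) * (\<integral>\<^sup>+x. ennreal (h x powr q * \<phi> x t) \<partial>M)" .
  qed
qed

end

lemma geo_int:
  fixes a r :: real
  assumes a: "a > 0" and r: "r > 0"
  shows "(\<integral>\<^sup>+k. ennreal (2 powr (r * real_of_int k)) * indicator {k. 2 powr real_of_int k < a} k \<partial>count_space (UNIV::int set))
     \<le> ennreal (a powr r / (1 - 2 powr (- r)))"
proof -
  define k0 where "k0 = \<lceil>log 2 a\<rceil> - 1"
  have set_eq: "{k::int. 2 powr real_of_int k < a} = {..k0}"
  proof -
    have "2 powr real_of_int k < a \<longleftrightarrow> k \<le> k0" for k
    proof -
      have "2 powr real_of_int k < a \<longleftrightarrow> 2 powr real_of_int k < 2 powr (log 2 a)"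
        using a by simp
      also have "\<dots> \<longleftrightarrow> real_of_int k < log 2 a" by simp
      also have "\<dots> \<longleftrightarrow> k < \<lceil>log 2 a\<rceil>" by (simp add: less_ceiling_iff)
      also have "\<dots> \<longleftrightarrow> k \<le> k0" by (simp add: k0_def)
      finally show ?thesis .
    qed
    then show ?thesis by auto
  qed
  define x where "x = 2 powr (- r)"
  have "2 powr (- r) < 2 powr 0" using r by (intro powr_less_mono) auto
  then have x: "0 < x" "x < 1" by (auto simp: x_def)
  have bij: "bij_betw (\<lambda>j::nat. k0 - int j) UNIV {..k0}"
    by (rule bij_betwI[where g = "\<lambda>k. nat (k0 - k)"]) auto
  have "(\<integral>\<^sup>+k. ennreal (2 powr (r * real_of_int k)) * indicator {k. 2 powr real_of_int k < a} k \<partial>count_space (UNIV::int set))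
      = (\<integral>\<^sup>+k. ennreal (2 powr (r * real_of_int k)) \<partial>count_space {..k0})"
    unfolding set_eq by (simp add: nn_integral_count_space_indicator)
  also have "\<dots> = (\<integral>\<^sup>+j. ennreal (2 powr (r * real_of_int (k0 - int j))) \<partial>count_space UNIV)"
    by (rule nn_integral_bij_count_space[OF bij, symmetric])
  also have "\<dots> = (\<Sum>j. ennreal (2 powr (r * real_of_int k0) * x ^ j))"
  proof -
    have "2 powr (r * real_of_int (k0 - int j)) = 2 powr (r * real_of_int k0) * x ^ j" for j
    proof -
      have "2 powr (r * real_of_int (k0 - int j)) = 2 powr (r * real_of_int k0 + (- r) * real j)"
        by (simp add: algebra_simps)
      also have "\<dots> = 2 powr (r * real_of_int k0) * (2 powr (- r)) powr real j"
        by (simp only: powr_add powr_powr)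
      also have "(2 powr (- r)) powr real j = x ^ j"
        unfolding x_def by (simp add: powr_realpow)
      finally show ?thesis .
    qed
    then show ?thesis by (simp add: nn_integral_count_space_nat)
  qed
  also have "\<dots> = ennreal (\<Sum>j. 2 powr (r * real_of_int k0) * x ^ j)"
    using x by (intro suminf_ennreal2) (auto intro!: summable_mult summable_geometric)
  also have "(\<Sum>j. 2 powr (r * real_of_int k0) * x ^ j) = 2 powr (r * real_of_int k0) * (1 / (1 - x))"
    using x by (simp add: suminf_mult[OF summable_geometric] suminf_geometric)
  also have "\<dots> \<le> a powr r / (1 - 2 powr (- r))"
  proof -
    have "2 powr real_of_int k0 < a" using set_eq by auto
    then have "(2 powr real_of_int k0) powr r \<le> a powr r"
      using r by (intro powr_mono2) auto
    then have "2 powr (r * real_of_int k0) \<le> a powr r" by (simp add: powr_powr mult.commute)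
    then show ?thesis using x by (simp add: x_def divide_right_mono)
  qed
  finally show ?thesis by (simp add: ennreal_leI)
qed

lemma single_le_count:
  fixes f :: "int \<Rightarrow> ennreal"
  shows "f k \<le> (\<integral>\<^sup>+j. f j \<partial>count_space UNIV)"
proof -
  have "f k = (\<integral>\<^sup>+j. f j * indicator {k} j \<partial>count_space UNIV)" by simp
  also have "\<dots> \<le> (\<integral>\<^sup>+j. f j \<partial>count_space UNIV)"
    by (intro nn_integral_mono) (simp add: indicator_def)
  finally show ?thesis .
qed

lemma phi_ext_bound:
  fixes ph :: "real \<Rightarrow> real" and s :: ennreal
  assumes mono: "mono_on {0..} ph" and ph0: "ph 0 = 0" and pos: "\<And>t. t > 0 \<Longrightarrow> ph t > 0"
  shows "(if s = \<infinity> then \<infinity> else ennreal (ph (enn2real s)))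
    \<le> (\<integral>\<^sup>+k. ennreal (ph (2 powr (real_of_int k + 1))) * indicator {k. ennreal (2 powr real_of_int k) < s} k \<partial>count_space (UNIV::int set))"
    (is "?L \<le> ?R")
proof (cases "s = \<infinity>")
  case True
  have "?R \<ge> (\<integral>\<^sup>+k. ennreal (ph 2) * indicator {k. k \<ge> 0} k \<partial>count_space (UNIV::int set))"
  proof (intro nn_integral_mono)
    fix k :: int
    show "ennreal (ph 2) * indicator {k. k \<ge> 0} k \<le> ennreal (ph (2 powr (real_of_int k + 1))) * indicator {k. ennreal (2 powr real_of_int k) < s} k"
    proof (cases "k \<ge> 0")
      case True
      have "2 powr 1 \<le> 2 powr (real_of_int k + 1)" using True by (intro powr_mono) auto
      then have "ph 2 \<le> ph (2 powr (real_of_int k + 1))"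
        using mono by (intro mono_onD[OF mono]) auto
      then show ?thesis using True \<open>s = \<infinity>\<close> by (simp add: indicator_def ennreal_leI)
    qed simp
  qed
  also have "(\<integral>\<^sup>+k. ennreal (ph 2) * indicator {k. k \<ge> 0} k \<partial>count_space (UNIV::int set)) = \<infinity>"
  proof -
    have inf: "infinite {k::int. k \<ge> 0}"
      by (metis infinite_Ici atLeast_def)
    have "(\<integral>\<^sup>+k. ennreal (ph 2) * indicator {k. k \<ge> 0} k \<partial>count_space (UNIV::int set))
        = ennreal (ph 2) * emeasure (count_space UNIV) {k::int. k \<ge> 0}"
      by (rule nn_integral_cmult_indicator) simp
    also have "\<dots> = \<infinity>" using inf pos[of 2] by (simp add: ennreal_mult_top)
    finally show ?thesis .
  qed
  finally show ?thesis using True by (simp add: top_unique)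
next
  case False
  then obtain sg where sg: "s = ennreal sg" "sg \<ge> 0" by (cases s rule: ennreal_cases) auto
  show ?thesis
  proof (cases "sg = 0")
    case True
    then show ?thesis using sg ph0 by simp
  next
    case False
    then have sgp: "sg > 0" using sg by simp
    define k where "k = \<lceil>log 2 sg\<rceil> - 1"
    have k1: "2 powr real_of_int k < sg"
    proof -
      have "real_of_int k < log 2 sg" unfolding k_def by linarith
      then have "2 powr real_of_int k < 2 powr (log 2 sg)" by simp
      then show ?thesis using sgp by simp
    qed
    have k2: "sg \<le> 2 powr (real_of_int k + 1)"
    proof -
      have "log 2 sg \<le> real_of_int k + 1" unfolding k_def by linarith
      then have "2 powr (log 2 sg) \<le> 2 powr (real_of_int k + 1)" by simp
      then show ?thesis using sgp by simp
    qed
    have "?L = ennreal (ph sg)" using sg \<open>s \<noteq> \<infinity>\<close> by simp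
    also have "\<dots> \<le> ennreal (ph (2 powr (real_of_int k + 1)))"
      using k2 sgp by (intro ennreal_leI mono_onD[OF mono]) auto
    also have "\<dots> = ennreal (ph (2 powr (real_of_int k + 1))) * indicator {k. ennreal (2 powr real_of_int k) < s} k"
      using k1 sg by (simp add: indicator_def ennreal_less_iff)
    also have "\<dots> \<le> ?R" by (rule single_le_count)
    finally show ?thesis .
  qed
qed


lemma type_bound:
  fixes ph :: "real \<Rightarrow> real"
  assumes Cl: "Cl > 0" and low: "\<And>t s. t \<ge> 0 \<Longrightarrow> 0 < s \<Longrightarrow> s < 1 \<Longrightarrow> ph (s * t) \<le> Cl * s powr p * ph t"
    and Cu: "Cu > 0" and up: "\<And>t s. t \<ge> 0 \<Longrightarrow> s \<ge> 1 \<Longrightarrow> ph (s * t) \<le> Cu * s powr pp * ph t"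
    and p: "p > 0" and pp: "pp \<ge> p" and nonneg: "\<And>t. t \<ge> 0 \<Longrightarrow> ph t \<ge> 0"
    and t: "t > 0" and u: "u > 0" "u < 8 * t"
  shows "ph u \<le> max Cl (Cu * 8 powr pp) * (u / t) powr p * ph t"
proof -
  define s where "s = u / t"
  have us: "u = s * t" using t by (simp add: s_def)
  have s0: "s > 0" using u t by (simp add: s_def)
  have s4: "s < 8" using u t by (simp add: s_def field_simps)
  have pt: "ph t \<ge> 0" using nonneg t by simp
  show ?thesis
  proof (cases "s < 1")
    case True
    have "ph u \<le> Cl * s powr p * ph t" unfolding us using low[of t s] t s0 True by simp
    also have "\<dots> \<le> max Cl (Cu * 8 powr pp) * s powr p * ph t"
      using pt by (intro mult_right_mono) auto
    finally show ?thesis by (simp add: s_def)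
  next
    case False
    then have s1: "s \<ge> 1" by simp
    have "ph u \<le> Cu * s powr pp * ph t" unfolding us using up[of t s] t s1 by simp
    also have "\<dots> \<le> Cu * 8 powr pp * ph t"
      using pt Cu s4 s0 p pp by (intro mult_right_mono mult_left_mono powr_mono2) auto
    also have "\<dots> \<le> Cu * 8 powr pp * s powr p * ph t"
    proof -
      have "1 \<le> s powr p" using s1 p by (simp add: ge_one_powr_ge_zero)
      then have "1 * ph t \<le> s powr p * ph t" using pt by (rule mult_right_mono)
      then have "(Cu * 8 powr pp) * ph t \<le> (Cu * 8 powr pp) * (s powr p * ph t)"
        using Cu by (intro mult_left_mono) auto
      then show ?thesis by (simp add: mult.assoc)
    qed
    also have "\<dots> \<le> max Cl (Cu * 8 powr pp) * s powr p * ph t"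
      using pt by (intro mult_right_mono) auto
    finally show ?thesis by (simp add: s_def)
  qed
qed

lemma term_real:
  fixes K C2 p q h A pt ph :: real
  assumes K: "K > 0" and C2: "C2 > 0" and h: "h > 0" and A: "A > 0" and q: "q > 0" and pq: "p > q"
    and ph: "ph \<ge> 0" and pt: "pt \<le> C2 * ((2 * A) / h) powr p * ph"
  shows "K / (A / 2) powr q * (h powr q * pt) \<le> (K * C2 * 2 powr (q + p) * ph * h powr (- (p - q))) * A powr (p - q)"
proof -
  have c: "K / (A / 2) powr q * h powr q \<ge> 0" using K A h by simp
  have "K / (A / 2) powr q * (h powr q * pt) = (K / (A / 2) powr q * h powr q) * pt" by simp
  also have "\<dots> \<le> (K / (A / 2) powr q * h powr q) * (C2 * ((2 * A) / h) powr p * ph)"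
    using pt c by (rule mult_left_mono)
  also have "\<dots> = (K * C2 * 2 powr (q + p) * ph * h powr (- (p - q))) * A powr (p - q)"
  proof -
    have e1: "(A / 2) powr q = A powr q / 2 powr q" using A by (simp add: powr_divide)
    have e2: "((2 * A) / h) powr p = 2 powr p * A powr p / h powr p" using A h by (simp add: powr_divide powr_mult)
    have e3: "A powr (p - q) = A powr p / A powr q" using A by (simp add: powr_diff)
    have e4: "h powr (- (p - q)) = h powr q / h powr p" using h by (simp add: powr_minus_divide powr_diff)
    have e5: "2 powr (q + p) = 2 powr q * 2 powr p" by (simp add: powr_add)
    show ?thesis unfolding e1 e2 e3 e4 e5 using A h by (simp add: field_simps)
  qed
  finally show ?thesis .
qed

context filt begin

lemma trunc:
  fixes h :: "'a \<Rightarrow> real" and lam :: real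
  assumes hm[measurable]: "h \<in> borel_measurable M" and hpos: "\<And>x. x \<in> space M \<Longrightarrow> h x \<ge> 0" and lam: "lam > 0"
  shows "AE x in M. \<forall>n. nn_cond_exp M (F n) (\<lambda>y. ennreal (h y)) x
      \<le> nn_cond_exp M (F n) (\<lambda>y. ennreal (if lam < h y then h y else 0)) x + ennreal lam"
proof (subst AE_all_countable, intro allI)
  fix n
  have 1: "AE x in M. nn_cond_exp M (F n) (\<lambda>y. ennreal (h y)) x
      \<le> nn_cond_exp M (F n) (\<lambda>y. ennreal (if lam < h y then h y else 0) + ennreal lam) x"
  proof (rule E_mono)
    show "AE x in M. ennreal (h x) \<le> ennreal (if lam < h x then h x else 0) + ennreal lam"
    proof (rule AE_I2)
      fix x assume "x \<in> space M"
      show "ennreal (h x) \<le> ennreal (if lam < h x then h x else 0) + ennreal lam"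
      proof (cases "lam < h x")
        case True then show ?thesis by simp
      next
        case False then show ?thesis by (simp add: ennreal_leI)
      qed
    qed
  qed measurable
  have 2: "AE x in M. nn_cond_exp M (F n) (\<lambda>y. ennreal (if lam < h y then h y else 0)) x + nn_cond_exp M (F n) (\<lambda>y. ennreal lam) x
      = nn_cond_exp M (F n) (\<lambda>y. ennreal (if lam < h y then h y else 0) + ennreal lam) x"
    by (rule E_sum) measurable
  have 3: "AE x in M. nn_cond_exp M (F n) (\<lambda>y. ennreal lam) x = ennreal lam"
    by (rule E_const)
  show "AE x in M. nn_cond_exp M (F n) (\<lambda>y. ennreal (h y)) x
      \<le> nn_cond_exp M (F n) (\<lambda>y. ennreal (if lam < h y then h y else 0)) x + ennreal lam"
    using 1 2 3 by eventually_elim simp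
qed

lemma trunc_set:
  fixes h :: "'a \<Rightarrow> real" and lam :: real
  assumes hm[measurable]: "h \<in> borel_measurable M" and hpos: "\<And>x. x \<in> space M \<Longrightarrow> h x \<ge> 0" and lam: "lam > 0"
  shows "AE x in M. ennreal (2 * lam) < (SUP n. nn_cond_exp M (F n) (\<lambda>y. ennreal (h y)) x) \<longrightarrow>
     (\<exists>n. ennreal lam < nn_cond_exp M (F n) (\<lambda>y. ennreal (if lam < h y then h y else 0)) x)"
proof -
  have T: "AE x in M. \<forall>n. nn_cond_exp M (F n) (\<lambda>y. ennreal (h y)) x
      \<le> nn_cond_exp M (F n) (\<lambda>y. ennreal (if lam < h y then h y else 0)) x + ennreal lam"
    using trunc[OF hm hpos lam] by blast
  show ?thesis
  proof (rule AE_mp[OF T], rule AE_I2, rule impI)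
  fix x assume "x \<in> space M" and elim: "\<forall>n. nn_cond_exp M (F n) (\<lambda>y. ennreal (h y)) x
      \<le> nn_cond_exp M (F n) (\<lambda>y. ennreal (if lam < h y then h y else 0)) x + ennreal lam"
  show "ennreal (2 * lam) < (SUP n. nn_cond_exp M (F n) (\<lambda>y. ennreal (h y)) x) \<longrightarrow>
     (\<exists>n. ennreal lam < nn_cond_exp M (F n) (\<lambda>y. ennreal (if lam < h y then h y else 0)) x)"
  proof
    assume "ennreal (2 * lam) < (SUP n. nn_cond_exp M (F n) (\<lambda>y. ennreal (h y)) x)"
    then obtain n where n: "ennreal (2 * lam) < nn_cond_exp M (F n) (\<lambda>y. ennreal (h y)) x"
      by (auto simp: less_SUP_iff)
    show "\<exists>n. ennreal lam < nn_cond_exp M (F n) (\<lambda>y. ennreal (if lam < h y then h y else 0)) x"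
    proof (rule exI[of _ n], rule ccontr)
      assume "\<not> ennreal lam < nn_cond_exp M (F n) (\<lambda>y. ennreal (if lam < h y then h y else 0)) x"
      then have "nn_cond_exp M (F n) (\<lambda>y. ennreal (if lam < h y then h y else 0)) x \<le> ennreal lam" by simp
      then have "nn_cond_exp M (F n) (\<lambda>y. ennreal (h y)) x \<le> ennreal lam + ennreal lam"
        using elim[rule_format, of n] by (meson add_right_mono order_trans)
      also have "\<dots> = ennreal (2 * lam)" using lam by (simp add: ennreal_plus[symmetric])
      finally show False using n by simp
    qed
  qed
  qed
qed

end

lemma floor_log_bounds:
  fixes hx :: real assumes hx: "hx > 0"
  shows "2 powr real_of_int \<lfloor>log 2 hx\<rfloor> \<le> hx" "hx < 2 * 2 powr real_of_int \<lfloor>log 2 hx\<rfloor>"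
proof -
  have "2 powr real_of_int \<lfloor>log 2 hx\<rfloor> \<le> 2 powr (log 2 hx)" by (intro powr_mono) auto
  then show "2 powr real_of_int \<lfloor>log 2 hx\<rfloor> \<le> hx" using hx by simp
  have "log 2 hx < real_of_int \<lfloor>log 2 hx\<rfloor> + 1" by linarith
  then have "2 powr (log 2 hx) < 2 powr (real_of_int \<lfloor>log 2 hx\<rfloor> + 1)" by simp
  then show "hx < 2 * 2 powr real_of_int \<lfloor>log 2 hx\<rfloor>" using hx by (simp add: powr_add)
qed

lemma pt_bound:
  fixes Kp C2 p q hx ps pt m :: real and k :: int
  assumes Kp: "Kp > 0" and C2: "C2 > 0" and q: "q > 0" and pq: "p > q" and hx: "hx > 0"
    and m: "m = 2 powr real_of_int \<lfloor>log 2 hx\<rfloor>" and ps: "ps \<ge> 0" and pt: "pt \<ge> 0"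
    and ptb: "2 powr real_of_int k / 2 < hx \<Longrightarrow> pt \<le> C2 * ((2 * 2 powr real_of_int k) / m) powr p * ps"
  shows "ennreal (Kp / (2 powr real_of_int k / 2) powr q) * ennreal ((if 2 powr real_of_int k / 2 < hx then hx else 0) powr q * pt)
    \<le> ennreal (2 powr q * (Kp * C2 * 2 powr (q + p) * ps * m powr (- (p - q))))
       * (ennreal (2 powr ((p - q) * real_of_int k)) * indicator {k. 2 powr real_of_int k < 4 * m} k)"
proof (cases "2 powr real_of_int k / 2 < hx")
  case False
  then show ?thesis by simp
next
  case True
  define A where "A = 2 powr real_of_int k"
  have A: "A > 0" by (simp add: A_def)
  have mb: "m \<le> hx" "hx < 2 * m" using floor_log_bounds[OF hx] m by auto
  have m0: "m > 0" using m by simp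
  have ind: "2 powr real_of_int k < 4 * m" using True mb by linarith
  have ptb': "pt \<le> C2 * ((2 * A) / m) powr p * ps" using ptb[OF True] by (simp add: A_def)
  have hq: "hx powr q \<le> 2 powr q * m powr q"
  proof -
    have "hx powr q \<le> (2 * m) powr q" using mb hx q by (intro powr_mono2) auto
    then show ?thesis using m0 by (simp add: powr_mult)
  qed
  have "Kp / (A / 2) powr q * (hx powr q * pt) \<le> Kp / (A / 2) powr q * ((2 powr q * m powr q) * pt)"
    using hq pt Kp A by (intro mult_left_mono mult_right_mono) auto
  also have "\<dots> = 2 powr q * (Kp / (A / 2) powr q * (m powr q * pt))" by simp
  also have "\<dots> \<le> 2 powr q * ((Kp * C2 * 2 powr (q + p) * ps * m powr (- (p - q))) * A powr (p - q))"
    using term_real[OF Kp C2 m0 A q pq ps ptb'] by (intro mult_left_mono) auto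
  also have "A powr (p - q) = 2 powr ((p - q) * real_of_int k)"
    by (simp add: A_def powr_powr mult.commute)
  finally have main: "Kp / (A / 2) powr q * (hx powr q * pt)
      \<le> 2 powr q * (Kp * C2 * 2 powr (q + p) * ps * m powr (- (p - q))) * 2 powr ((p - q) * real_of_int k)"
    by (simp add: mult.assoc)
  have nn1: "Kp / (A / 2) powr q \<ge> 0" using Kp A by simp
  have nn2: "hx powr q * pt \<ge> 0" using pt by simp
  have nn3: "2 powr q * (Kp * C2 * 2 powr (q + p) * ps * m powr (- (p - q))) \<ge> 0" using Kp C2 ps by simp
  have "ennreal (Kp / (A / 2) powr q) * ennreal (hx powr q * pt) = ennreal (Kp / (A / 2) powr q * (hx powr q * pt))"
    using nn1 nn2 by (rule ennreal_mult[symmetric])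
  also have "\<dots> \<le> ennreal (2 powr q * (Kp * C2 * 2 powr (q + p) * ps * m powr (- (p - q))) * 2 powr ((p - q) * real_of_int k))"
    using main by (rule ennreal_leI)
  also have "\<dots> = ennreal (2 powr q * (Kp * C2 * 2 powr (q + p) * ps * m powr (- (p - q)))) * ennreal (2 powr ((p - q) * real_of_int k))"
    using nn3 by (intro ennreal_mult) auto
  finally show ?thesis using True ind by (simp add: A_def indicator_def)
qed


lemma sum_bound:
  fixes c m r :: real
  assumes c: "c \<ge> 0" and m: "m > 0" and r: "r > 0"
  shows "(\<integral>\<^sup>+k. ennreal (c * m powr (- r)) * (ennreal (2 powr (r * real_of_int k)) * indicator {k. 2 powr real_of_int k < 4 * m} k) \<partial>count_space (UNIV::int set))
    \<le> ennreal (c * (4 powr r / (1 - 2 powr (- r))))"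
proof -
  have "2 powr (- r) < 2 powr 0" using r by (intro powr_less_mono) auto
  then have x1: "1 - 2 powr (- r) > 0" by simp
  have "(\<integral>\<^sup>+k. ennreal (c * m powr (- r)) * (ennreal (2 powr (r * real_of_int k)) * indicator {k. 2 powr real_of_int k < 4 * m} k) \<partial>count_space (UNIV::int set))
      = ennreal (c * m powr (- r)) * (\<integral>\<^sup>+k. ennreal (2 powr (r * real_of_int k)) * indicator {k. 2 powr real_of_int k < 4 * m} k \<partial>count_space (UNIV::int set))"
    by (rule nn_integral_cmult) simp
  also have "\<dots> \<le> ennreal (c * m powr (- r)) * ennreal ((4 * m) powr r / (1 - 2 powr (- r)))"
    using m r by (intro mult_left_mono geo_int) auto
  also have "\<dots> = ennreal (c * m powr (- r) * ((4 * m) powr r / (1 - 2 powr (- r))))"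
    using c x1 m by (intro ennreal_mult[symmetric]) auto
  also have "c * m powr (- r) * ((4 * m) powr r / (1 - 2 powr (- r))) = c * (4 powr r / (1 - 2 powr (- r)))"
  proof -
    have "m powr (- r) * (4 * m) powr r = 4 powr r"
      using m by (simp add: powr_mult powr_minus field_simps)
    then show ?thesis by (simp add: field_simps)
  qed
  finally show ?thesis .
qed

context filt begin

lemma core:
  fixes \<phi> :: "'a \<Rightarrow> real \<Rightarrow> real" and h :: "'a \<Rightarrow> real" and p q Kp C2 :: real
  assumes MO: "MO_function M \<phi>" and q: "q \<ge> 1" and pq: "p > q"
    and Kp: "Kp > 0"
    and weakK: "\<forall>t>0. \<forall>lam>0. \<forall>h. h \<in> borel_measurable M \<and> (\<forall>x\<in>space M. h x \<ge> 0) \<longrightarrow>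
    (\<integral>\<^sup>+x. ennreal (\<phi> x t) * indicator {x\<in>space M. \<exists>n. ennreal lam < nn_cond_exp M (F n) (\<lambda>y. ennreal (h y)) x} x \<partial>M)
      \<le> ennreal (Kp / lam powr q) * (\<integral>\<^sup>+x. ennreal (h x powr q * \<phi> x t) \<partial>M)"
    and C2: "C2 > 0"
    and tb: "\<And>x t u. x \<in> space M \<Longrightarrow> t > 0 \<Longrightarrow> 0 < u \<Longrightarrow> u < 8 * t \<Longrightarrow> \<phi> x u \<le> C2 * (u / t) powr p * \<phi> x t"
    and hm[measurable]: "h \<in> borel_measurable M" and hpos: "\<And>x. x \<in> space M \<Longrightarrow> h x \<ge> 0"
  shows "(\<integral>\<^sup>+x. phi_ext \<phi> x (SUP n. nn_cond_exp M (F n) (\<lambda>y. ennreal (h y)) x) \<partial>M)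
    \<le> ennreal (2 powr q * (Kp * C2 * 2 powr (q + p)) * (4 powr (p - q) / (1 - 2 powr (- (p - q)))))
       * (\<integral>\<^sup>+x. ennreal (\<phi> x (h x)) \<partial>M)"
proof -
  have mono: "mono_on {0..} (\<phi> x)" and ph0: "\<phi> x 0 = 0" and pos: "\<And>t. t > 0 \<Longrightarrow> \<phi> x t > 0"
    and nonneg: "\<And>t. t \<ge> 0 \<Longrightarrow> \<phi> x t \<ge> 0" if "x \<in> space M" for x
    using MO that unfolding MO_function_def by auto
  have phim: "(\<lambda>x. \<phi> x t) \<in> borel_measurable M" if "t \<ge> 0" for t
    using MO that unfolding MO_function_def by auto
  define r where "r = p - q"
  have r: "r > 0" using pq by (simp add: r_def)
  define S where "S x = (SUP n. nn_cond_exp M (F n) (\<lambda>y. ennreal (h y)) x)" for x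
  have Sm[measurable]: "S \<in> borel_measurable M" unfolding S_def by measurable
  define Tt where "Tt k x = ennreal (\<phi> x (2 * 2 powr real_of_int k)) * indicator {x\<in>space M. ennreal (2 powr real_of_int k) < S x} x" for k :: int and x
  have Ttm: "(\<lambda>x. Tt k x) \<in> borel_measurable M" for k
  proof -
    have [measurable]: "(\<lambda>x. \<phi> x (2 * 2 powr real_of_int k)) \<in> borel_measurable M" by (rule phim) simp
    show ?thesis unfolding Tt_def by measurable
  qed
  define m where "m x = 2 powr real_of_int \<lfloor>log 2 (h x)\<rfloor>" for x
  have mm[measurable]: "m \<in> borel_measurable M" unfolding m_def by measurable
  have psim[measurable]: "(\<lambda>x. \<phi> x (m x)) \<in> borel_measurable M"
  proof -
    have "(\<lambda>x. \<phi> x (2 powr real_of_int ((\<lambda>x. \<lfloor>log 2 (h x)\<rfloor>) x))) \<in> borel_measurable M"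
    proof (rule measurable_compose_countable[where f = "\<lambda>i x. \<phi> x (2 powr real_of_int i)"])
      show "(\<lambda>x. \<phi> x (2 powr real_of_int i)) \<in> borel_measurable M" for i :: int by (rule phim) simp
      show "(\<lambda>x. \<lfloor>log 2 (h x)\<rfloor>) \<in> measurable M (count_space UNIV)"
        by (rule measurable_compose[OF _ measurable_real_floor]) measurable
    qed
    then show ?thesis by (simp add: m_def)
  qed
  define Cf where "Cf = 2 powr q * (Kp * C2 * 2 powr (q + p)) * (4 powr r / (1 - 2 powr (- r)))"
  define R where "R k x = (if h x > 0 then ennreal (2 powr q * (Kp * C2 * 2 powr (q + p) * \<phi> x (m x) * m x powr (- (p - q))))
       * (ennreal (2 powr ((p - q) * real_of_int k)) * indicator {k. 2 powr real_of_int k < 4 * m x} k) else 0)" for k :: int and x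
  have Rm: "(\<lambda>x. R k x) \<in> borel_measurable M" for k
    unfolding R_def by measurable
  have s1: "(\<integral>\<^sup>+x. phi_ext \<phi> x (S x) \<partial>M) \<le> (\<integral>\<^sup>+x. (\<integral>\<^sup>+k. Tt k x \<partial>count_space UNIV) \<partial>M)"
  proof (rule nn_integral_mono)
    fix x assume x: "x \<in> space M"
    have "phi_ext \<phi> x (S x) \<le> (\<integral>\<^sup>+k. ennreal (\<phi> x (2 powr (real_of_int k + 1))) * indicator {k. ennreal (2 powr real_of_int k) < S x} k \<partial>count_space (UNIV::int set))"
      unfolding phi_ext_def by (rule phi_ext_bound[OF mono[OF x] ph0[OF x] pos[OF x]])
    also have "\<dots> = (\<integral>\<^sup>+k. Tt k x \<partial>count_space UNIV)"
    proof (rule nn_integral_cong)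
      fix k :: int
      have "2 powr (real_of_int k + 1) = 2 * 2 powr real_of_int k" by (simp add: powr_add)
      then show "ennreal (\<phi> x (2 powr (real_of_int k + 1))) * indicator {k. ennreal (2 powr real_of_int k) < S x} k = Tt k x"
        using x by (simp add: Tt_def indicator_def)
    qed
    finally show "phi_ext \<phi> x (S x) \<le> (\<integral>\<^sup>+k. Tt k x \<partial>count_space UNIV)" .
  qed
  also have s2: "\<dots> = (\<integral>\<^sup>+k. (\<integral>\<^sup>+x. Tt k x \<partial>M) \<partial>count_space UNIV)"
    by (rule nn_integral_count_space_nn_integral) (auto intro: Ttm)
  also have s3: "\<dots> \<le> (\<integral>\<^sup>+k. (\<integral>\<^sup>+x. R k x \<partial>M) \<partial>count_space UNIV)"
  proof (rule nn_integral_mono)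
    fix k :: int
    define A where "A = 2 powr real_of_int k"
    define lam where "lam = A / 2"
    define g where "g y = (if lam < h y then h y else 0)" for y
    have A: "A > 0" by (simp add: A_def)
    have lam: "lam > 0" using A by (simp add: lam_def)
    have gm[measurable]: "g \<in> borel_measurable M" unfolding g_def by measurable
    have gpos: "\<forall>x\<in>space M. g x \<ge> 0" using hpos by (simp add: g_def)
    have tm[measurable]: "(\<lambda>x. \<phi> x (2 * A)) \<in> borel_measurable M" by (rule phim) (use A in simp)
    have TS: "AE x in M. ennreal (2 * lam) < S x \<longrightarrow> (\<exists>n. ennreal lam < nn_cond_exp M (F n) (\<lambda>y. ennreal (g y)) x)"
      unfolding S_def g_def by (rule trunc_set[OF hm hpos lam])
    have "(\<integral>\<^sup>+x. Tt k x \<partial>M) \<le> (\<integral>\<^sup>+x. ennreal (\<phi> x (2 * A)) * indicator {x\<in>space M. \<exists>n. ennreal lam < nn_cond_exp M (F n) (\<lambda>y. ennreal (g y)) x} x \<partial>M)"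
    proof (rule nn_integral_mono_AE)
      show "AE x in M. Tt k x \<le> ennreal (\<phi> x (2 * A)) * indicator {x\<in>space M. \<exists>n. ennreal lam < nn_cond_exp M (F n) (\<lambda>y. ennreal (g y)) x} x"
        using TS AE_space
      proof eventually_elim
        case (elim x)
        have "2 * lam = A" by (simp add: lam_def)
        then show ?case using elim by (auto simp: Tt_def A_def indicator_def)
      qed
    qed
    also have "\<dots> \<le> ennreal (Kp / lam powr q) * (\<integral>\<^sup>+x. ennreal (g x powr q * \<phi> x (2 * A)) \<partial>M)"
      using weakK A lam gm gpos by simp
    also have "\<dots> = (\<integral>\<^sup>+x. ennreal (Kp / lam powr q) * ennreal (g x powr q * \<phi> x (2 * A)) \<partial>M)"
      by (rule nn_integral_cmult[symmetric]) measurable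
    also have "\<dots> \<le> (\<integral>\<^sup>+x. R k x \<partial>M)"
    proof (rule nn_integral_mono)
      fix x assume x: "x \<in> space M"
      show "ennreal (Kp / lam powr q) * ennreal (g x powr q * \<phi> x (2 * A)) \<le> R k x"
      proof (cases "h x > 0")
        case True
        have mb: "m x \<le> h x" "h x < 2 * m x" using floor_log_bounds[OF True] by (auto simp: m_def)
        have m0: "m x > 0" by (simp add: m_def)
        have ptb: "\<phi> x (2 * 2 powr real_of_int k) \<le> C2 * ((2 * 2 powr real_of_int k) / m x) powr p * \<phi> x (m x)"
          if "2 powr real_of_int k / 2 < h x"
          using tb[OF x m0] that mb by (simp add: A_def)
        have "ennreal (Kp / (2 powr real_of_int k / 2) powr q) * ennreal ((if 2 powr real_of_int k / 2 < h x then h x else 0) powr q * \<phi> x (2 * 2 powr real_of_int k))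
          \<le> ennreal (2 powr q * (Kp * C2 * 2 powr (q + p) * \<phi> x (m x) * m x powr (- (p - q))))
             * (ennreal (2 powr ((p - q) * real_of_int k)) * indicator {k. 2 powr real_of_int k < 4 * m x} k)"
          by (rule pt_bound[OF Kp C2 _ pq True m_def]) (use q nonneg[OF x] m0 ptb in auto)
        then show ?thesis using True by (simp add: R_def g_def lam_def A_def)
      next
        case False
        then have "h x = 0" using hpos[OF x] by simp
        then show ?thesis using lam by (simp add: g_def)
      qed
    qed
    finally show "(\<integral>\<^sup>+x. Tt k x \<partial>M) \<le> (\<integral>\<^sup>+x. R k x \<partial>M)" .
  qed
  also have s4: "\<dots> = (\<integral>\<^sup>+x. (\<integral>\<^sup>+k. R k x \<partial>count_space UNIV) \<partial>M)"
    by (rule nn_integral_count_space_nn_integral[symmetric]) (auto intro: Rm)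
  also have s5: "\<dots> \<le> (\<integral>\<^sup>+x. ennreal Cf * ennreal (if h x > 0 then \<phi> x (m x) else 0) \<partial>M)"
  proof (rule nn_integral_mono)
    fix x assume x: "x \<in> space M"
    show "(\<integral>\<^sup>+k. R k x \<partial>count_space UNIV) \<le> ennreal Cf * ennreal (if h x > 0 then \<phi> x (m x) else 0)"
    proof (cases "h x > 0")
      case True
      have m0: "m x > 0" by (simp add: m_def)
      have ps: "\<phi> x (m x) \<ge> 0" using nonneg[OF x] m0 by simp
      define c where "c = 2 powr q * (Kp * C2 * 2 powr (q + p) * \<phi> x (m x))"
      have c: "c \<ge> 0" using ps Kp C2 by (simp add: c_def)
      have "(\<integral>\<^sup>+k. R k x \<partial>count_space UNIV) = (\<integral>\<^sup>+k. ennreal (c * m x powr (- r)) * (ennreal (2 powr (r * real_of_int k)) * indicator {k. 2 powr real_of_int k < 4 * m x} k) \<partial>count_space (UNIV::int set))"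
        using True by (intro nn_integral_cong) (simp add: R_def c_def r_def mult.assoc)
      also have "\<dots> \<le> ennreal (c * (4 powr r / (1 - 2 powr (- r))))"
        by (rule sum_bound[OF c m0 r])
      also have "\<dots> = ennreal Cf * ennreal (if h x > 0 then \<phi> x (m x) else 0)"
      proof -
        have "2 powr (- r) < 2 powr 0" using r by (intro powr_less_mono) auto
        then have x1: "1 - 2 powr (- r) > 0" by simp
        have "c * (4 powr r / (1 - 2 powr (- r))) = Cf * \<phi> x (m x)"
          by (simp add: c_def Cf_def)
        moreover have "Cf \<ge> 0" using x1 Kp C2 by (simp add: Cf_def)
        ultimately show ?thesis using True ps by (simp add: ennreal_mult)
      qed
      finally show ?thesis .
    next
      case False
      then show ?thesis by (simp add: R_def)
    qed
  qed
  also have s6: "\<dots> = ennreal Cf * (\<integral>\<^sup>+x. ennreal (if h x > 0 then \<phi> x (m x) else 0) \<partial>M)"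
    by (rule nn_integral_cmult) measurable
  also have s7: "\<dots> \<le> ennreal Cf * (\<integral>\<^sup>+x. ennreal (\<phi> x (h x)) \<partial>M)"
  proof (intro mult_left_mono nn_integral_mono)
    fix x assume x: "x \<in> space M"
    show "ennreal (if h x > 0 then \<phi> x (m x) else 0) \<le> ennreal (\<phi> x (h x))"
    proof (cases "h x > 0")
      case True
      have "m x \<le> h x" using floor_log_bounds[OF True] by (simp add: m_def)
      then have "\<phi> x (m x) \<le> \<phi> x (h x)"
        using x True by (intro mono_onD[OF mono]) (auto simp: m_def)
      then show ?thesis using True by (simp add: ennreal_leI)
    qed simp
  qed simp
  finally show ?thesis by (simp add: S_def Cf_def r_def)
qed

end

lemma nn_cmult_le:
  fixes c :: real and f :: "'a \<Rightarrow> ennreal"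
  assumes c: "c > 0"
  shows "(\<integral>\<^sup>+x. ennreal c * f x \<partial>M) \<le> ennreal c * (\<integral>\<^sup>+x. f x \<partial>M)"
  unfolding nn_integral_def[of M "\<lambda>x. ennreal c * f x"]
proof (rule SUP_least)
  fix g assume g: "g \<in> {g. simple_function M g \<and> g \<le> (\<lambda>x. ennreal c * f x)}"
  define g' where "g' x = ennreal (1 / c) * g x" for x
  have inv: "ennreal (1 / c) * ennreal c = 1" using c by (simp add: ennreal_mult[symmetric])
  have sg': "simple_function M g'" using g unfolding g'_def by auto
  have "g' \<le> f"
  proof (rule le_funI)
    fix x
    have "g' x \<le> ennreal (1 / c) * (ennreal c * f x)"
      unfolding g'_def using g by (intro mult_left_mono) (auto simp: le_fun_def)
    also have "\<dots> = f x" using inv by (simp add: mult.assoc[symmetric])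
    finally show "g' x \<le> f x" .
  qed
  have geq: "g = (\<lambda>x. ennreal c * g' x)"
    using inv by (auto simp: g'_def mult.assoc[symmetric] mult.commute[of "ennreal c"])
  have "integral\<^sup>S M g = ennreal c * integral\<^sup>S M g'"
    by (subst geq) (rule simple_integral_mult[OF sg'])
  also have "integral\<^sup>S M g' \<le> (\<integral>\<^sup>+x. f x \<partial>M)"
    unfolding nn_integral_def using sg' \<open>g' \<le> f\<close> by (intro SUP_upper) auto
  finally show "integral\<^sup>S M g \<le> ennreal c * (\<integral>\<^sup>+x. f x \<partial>M)"
    by (simp add: mult_left_mono)
qed

lemma phi_ext_mono:
  assumes mono: "mono_on {0..} (\<phi> x)" and le: "s \<le> s'"
  shows "phi_ext \<phi> x s \<le> phi_ext \<phi> x s'"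
proof (cases "s' = \<infinity>")
  case True then show ?thesis by (simp add: phi_ext_def)
next
  case False
  then have "s \<noteq> \<infinity>" using le by (auto simp: top_unique)
  then have "enn2real s \<le> enn2real s'" using le False by (simp add: enn2real_mono less_top)
  then have "\<phi> x (enn2real s) \<le> \<phi> x (enn2real s')" by (intro mono_onD[OF mono]) auto
  then show ?thesis using False \<open>s \<noteq> \<infinity>\<close> by (simp add: phi_ext_def ennreal_leI)
qed

context filt begin

lemma abs_cond_le:
  fixes f :: "'a \<Rightarrow> real"
  assumes fm[measurable]: "f \<in> borel_measurable M"
  shows "AE x in M. ennreal \<bar>real_cond_exp M (F n) f x\<bar> \<le> nn_cond_exp M (F n) (\<lambda>y. ennreal \<bar>f y\<bar>) x"
proof -
  have "AE x in M. nn_cond_exp M (F n) (\<lambda>y. ennreal (f y)) x + nn_cond_exp M (F n) (\<lambda>y. ennreal (- f y)) x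
     = nn_cond_exp M (F n) (\<lambda>y. ennreal (f y) + ennreal (- f y)) x"
    by (rule E_sum) measurable
  moreover have "(\<lambda>y. ennreal (f y) + ennreal (- f y)) = (\<lambda>y. ennreal \<bar>f y\<bar>)"
  proof
    fix y show "ennreal (f y) + ennreal (- f y) = ennreal \<bar>f y\<bar>"
      by (cases "f y \<ge> 0") (auto simp: ennreal_neg)
  qed
  ultimately show ?thesis
  proof (elim AE_mp, intro AE_I2 impI)
    fix x
    define a where "a = nn_cond_exp M (F n) (\<lambda>y. ennreal (f y)) x"
    define b where "b = nn_cond_exp M (F n) (\<lambda>y. ennreal (- f y)) x"
    assume "nn_cond_exp M (F n) (\<lambda>y. ennreal (f y)) x + nn_cond_exp M (F n) (\<lambda>y. ennreal (- f y)) x =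
       nn_cond_exp M (F n) (\<lambda>y. ennreal (f y) + ennreal (- f y)) x"
      and eq: "(\<lambda>y. ennreal (f y) + ennreal (- f y)) = (\<lambda>y. ennreal \<bar>f y\<bar>)"
    then have ab: "a + b = nn_cond_exp M (F n) (\<lambda>y. ennreal \<bar>f y\<bar>) x" by (simp add: a_def b_def)
    have "ennreal \<bar>real_cond_exp M (F n) f x\<bar> = ennreal \<bar>enn2real a - enn2real b\<bar>"
      by (simp add: real_cond_exp_def a_def b_def)
    also have "\<dots> \<le> ennreal (enn2real a + enn2real b)"
    proof (rule ennreal_leI)
      show "\<bar>enn2real a - enn2real b\<bar> \<le> enn2real a + enn2real b"
        using enn2real_nonneg[of a] enn2real_nonneg[of b] by arith
    qed
    also have "\<dots> = ennreal (enn2real a) + ennreal (enn2real b)" by (simp add: ennreal_plus)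
    also have "\<dots> \<le> a + b" by (intro add_mono) (simp_all add: ennreal_enn2real_if)
    finally show "ennreal \<bar>real_cond_exp M (F n) f x\<bar> \<le> nn_cond_exp M (F n) (\<lambda>y. ennreal \<bar>f y\<bar>) x"
      using ab by simp
  qed
qed

lemma doob_bound:
  fixes f :: "'a \<Rightarrow> real" and c :: real
  assumes fm[measurable]: "f \<in> borel_measurable M" and c: "c > 0"
  shows "AE x in M. doob_max M F f x * ennreal (1 / c) \<le> (SUP n. nn_cond_exp M (F n) (\<lambda>y. ennreal (\<bar>f y\<bar> / c)) x)"
proof -
  have "AE x in M. \<forall>n. ennreal \<bar>real_cond_exp M (F n) f x\<bar> * ennreal (1 / c) \<le> nn_cond_exp M (F n) (\<lambda>y. ennreal (\<bar>f y\<bar> / c)) x"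
  proof (subst AE_all_countable, intro allI)
    fix n
    have 1: "AE x in M. ennreal (1 / c) * nn_cond_exp M (F n) (\<lambda>y. ennreal \<bar>f y\<bar>) x = nn_cond_exp M (F n) (\<lambda>y. ennreal (1 / c) * ennreal \<bar>f y\<bar>) x"
      by (rule E_prod) measurable
    have eq: "(\<lambda>y. ennreal (1 / c) * ennreal \<bar>f y\<bar>) = (\<lambda>y. ennreal (\<bar>f y\<bar> / c))"
      using c by (auto simp: ennreal_mult[symmetric])
    show "AE x in M. ennreal \<bar>real_cond_exp M (F n) f x\<bar> * ennreal (1 / c) \<le> nn_cond_exp M (F n) (\<lambda>y. ennreal (\<bar>f y\<bar> / c)) x"
      using abs_cond_le[OF fm, of n] 1
    proof eventually_elim
      case (elim x)
      have "ennreal \<bar>real_cond_exp M (F n) f x\<bar> * ennreal (1 / c) \<le> nn_cond_exp M (F n) (\<lambda>y. ennreal \<bar>f y\<bar>) x * ennreal (1 / c)"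
        using elim(1) by (rule mult_right_mono) simp
      also have "\<dots> = nn_cond_exp M (F n) (\<lambda>y. ennreal (\<bar>f y\<bar> / c)) x"
        using elim(2) eq by (simp add: mult.commute)
      finally show ?case .
    qed
  qed
  then show ?thesis
  proof eventually_elim
    case (elim x)
    have "doob_max M F f x * ennreal (1 / c) = (SUP n. ennreal \<bar>real_cond_exp M (F n) f x\<bar> * ennreal (1 / c))"
      unfolding doob_max_def by (simp add: SUP_mult_right_ennreal)
    also have "\<dots> \<le> (SUP n. nn_cond_exp M (F n) (\<lambda>y. ennreal (\<bar>f y\<bar> / c)) x)"
      using elim by (intro SUP_mono) auto
    finally show ?case .
  qed
qed

end

theorem theorem3p2:
  fixes M :: "'a measure" and F :: "nat \<Rightarrow> 'a measure"
    and \<phi> :: "'a \<Rightarrow> real \<Rightarrow> real" and p_minus p_plus :: real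
  assumes "prob_space M"
    and "\<And>n. subalgebra M (F n)"
    and "\<And>m n. m \<le> n \<Longrightarrow> sets (F m) \<subseteq> sets (F n)"
    and "MO_function M \<phi>"
    and "mart_Ainf M F \<phi>"
    and "uniformly_lower_type M \<phi> p_minus"
    and "uniformly_upper_type M \<phi> p_plus"
    and "q_index M F \<phi> < p_minus"
    and "p_minus \<le> p_plus"
  shows "\<exists>C>0. \<forall>f. in_L_phi M \<phi> f \<longrightarrow>
            (AE x in M. doob_max M F f x < \<infinity>)
          \<and> in_L_phi M \<phi> (\<lambda>x. enn2real (doob_max M F f x))
          \<and> L_phi_norm M \<phi> (\<lambda>x. enn2real (doob_max M F f x)) \<le> C * L_phi_norm M \<phi> f
          \<and> (\<integral>\<^sup>+ x. phi_ext \<phi> x (doob_max M F f x) \<partial>M) \<le> ennreal C * MO_modular M \<phi> f"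
proof -
  interpret filt M F using assms(1-3) by (rule filt.intro)
  note MO = assms(4)
  have mono: "mono_on {0..} (\<phi> x)" and nonneg: "\<And>t. t \<ge> 0 \<Longrightarrow> \<phi> x t \<ge> 0" if "x \<in> space M" for x
    using MO that unfolding MO_function_def by auto
  define p where "p = p_minus"
  obtain q where q1: "q \<ge> 1" and qA: "mart_Aq M F q \<phi>" and qp: "q < p"
  proof -
    have ne: "{q. q \<ge> 1 \<and> mart_Aq M F q \<phi>} \<noteq> {}" using assms(5) unfolding mart_Ainf_def by auto
    from cInf_lessD[OF ne assms(8)[unfolded q_index_def]] that show ?thesis by (auto simp: p_def)
  qed
  have p0: "p > 0" using q1 qp by simp
  define P where "P K' \<longleftrightarrow> (\<forall>t>0. \<forall>lam>0. \<forall>h. h \<in> borel_measurable M \<and> (\<forall>x\<in>space M. h x \<ge> 0) \<longrightarrow>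
    (\<integral>\<^sup>+x. ennreal (\<phi> x t) * indicator {x\<in>space M. \<exists>n. ennreal lam < nn_cond_exp M (F n) (\<lambda>y. ennreal (h y)) x} x \<partial>M)
      \<le> ennreal (K' / lam powr q) * (\<integral>\<^sup>+x. ennreal (h x powr q * \<phi> x t) \<partial>M))" for K'
  define Kp where "Kp = (SOME K'. K' > 0 \<and> P K')"
  have "Kp > 0 \<and> P Kp" unfolding Kp_def
    by (rule someI_ex) (use weak_phi[OF MO qA q1] in \<open>simp only: P_def\<close>)
  then have Kp: "Kp > 0" and weakK: "\<forall>t>0. \<forall>lam>0. \<forall>h. h \<in> borel_measurable M \<and> (\<forall>x\<in>space M. h x \<ge> 0) \<longrightarrow>
    (\<integral>\<^sup>+x. ennreal (\<phi> x t) * indicator {x\<in>space M. \<exists>n. ennreal lam < nn_cond_exp M (F n) (\<lambda>y. ennreal (h y)) x} x \<partial>M)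
      \<le> ennreal (Kp / lam powr q) * (\<integral>\<^sup>+x. ennreal (h x powr q * \<phi> x t) \<partial>M)"
    unfolding P_def by simp_all
  define Cl where "Cl = (SOME C. C > 0 \<and> (\<forall>x\<in>space M. \<forall>t\<ge>0. \<forall>s. 0 < s \<and> s < 1 \<longrightarrow> \<phi> x (s * t) \<le> C * s powr p_minus * \<phi> x t))"
  have ClP: "Cl > 0 \<and> (\<forall>x\<in>space M. \<forall>t\<ge>0. \<forall>s. 0 < s \<and> s < 1 \<longrightarrow> \<phi> x (s * t) \<le> Cl * s powr p_minus * \<phi> x t)"
    unfolding Cl_def by (rule someI_ex) (use assms(6) in \<open>simp only: uniformly_lower_type_def\<close>)
  have Cl: "Cl > 0" using ClP by simp
  have low: "\<phi> x (s * t) \<le> Cl * s powr p * \<phi> x t" if "x \<in> space M" "t \<ge> 0" "0 < s" "s < 1" for x t s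
    using ClP that unfolding p_def by simp
  define Cu where "Cu = (SOME C. C > 0 \<and> (\<forall>x\<in>space M. \<forall>t\<ge>0. \<forall>s\<ge>1. \<phi> x (s * t) \<le> C * s powr p_plus * \<phi> x t))"
  have CuP: "Cu > 0 \<and> (\<forall>x\<in>space M. \<forall>t\<ge>0. \<forall>s\<ge>1. \<phi> x (s * t) \<le> Cu * s powr p_plus * \<phi> x t)"
    unfolding Cu_def by (rule someI_ex) (use assms(7) in \<open>simp only: uniformly_upper_type_def\<close>)
  have Cu: "Cu > 0" using CuP by simp
  have up: "\<phi> x (s * t) \<le> Cu * s powr p_plus * \<phi> x t" if "x \<in> space M" "t \<ge> 0" "s \<ge> 1" for x t s
    using CuP that by simp
  define C2 where "C2 = max Cl (Cu * 8 powr p_plus)"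
  have C2: "C2 > 0" using Cl by (simp add: C2_def)
  have tb: "\<phi> x u \<le> C2 * (u / t) powr p * \<phi> x t" if "x \<in> space M" "t > 0" "0 < u" "u < 8 * t" for x t u
    unfolding C2_def
    by (rule type_bound[OF Cl _ Cu _ p0 _ _ that(2-4)]) (use low up that assms(9) nonneg in \<open>auto simp: p_def\<close>)
  define Cc where "Cc = 2 powr q * (Kp * C2 * 2 powr (q + p)) * (4 powr (p - q) / (1 - 2 powr (- (p - q))))"
  have Cc: "Cc > 0"
  proof -
    have "2 powr (- (p - q)) < 2 powr 0" using qp by (intro powr_less_mono) auto
    then show ?thesis using Kp C2 by (simp add: Cc_def)
  qed
  have coreK: "(\<integral>\<^sup>+x. phi_ext \<phi> x (SUP n. nn_cond_exp M (F n) (\<lambda>y. ennreal (h y)) x) \<partial>M)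
      \<le> ennreal Cc * (\<integral>\<^sup>+x. ennreal (\<phi> x (h x)) \<partial>M)"
    if "h \<in> borel_measurable M" "\<And>x. x \<in> space M \<Longrightarrow> h x \<ge> 0" for h
    unfolding Cc_def by (rule core[OF MO q1 qp Kp weakK C2 tb that]) auto
  have scaled: "(\<integral>\<^sup>+x. phi_ext \<phi> x (doob_max M F f x * ennreal (1 / c)) \<partial>M) \<le> ennreal Cc * MO_modular M \<phi> (\<lambda>x. f x / c)"
    if fm: "f \<in> borel_measurable M" and c: "c > 0" for f c
  proof -
    have "(\<integral>\<^sup>+x. phi_ext \<phi> x (doob_max M F f x * ennreal (1 / c)) \<partial>M)
       \<le> (\<integral>\<^sup>+x. phi_ext \<phi> x (SUP n. nn_cond_exp M (F n) (\<lambda>y. ennreal (\<bar>f y\<bar> / c)) x) \<partial>M)"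
    proof (rule nn_integral_mono_AE)
      show "AE x in M. phi_ext \<phi> x (doob_max M F f x * ennreal (1 / c))
         \<le> phi_ext \<phi> x (SUP n. nn_cond_exp M (F n) (\<lambda>y. ennreal (\<bar>f y\<bar> / c)) x)"
      proof (rule AE_mp[OF doob_bound[OF fm c]], rule AE_I2, rule impI)
        fix x assume x: "x \<in> space M"
          and le: "doob_max M F f x * ennreal (1 / c) \<le> (SUP n. nn_cond_exp M (F n) (\<lambda>y. ennreal (\<bar>f y\<bar> / c)) x)"
        show "phi_ext \<phi> x (doob_max M F f x * ennreal (1 / c))
         \<le> phi_ext \<phi> x (SUP n. nn_cond_exp M (F n) (\<lambda>y. ennreal (\<bar>f y\<bar> / c)) x)"
          by (rule phi_ext_mono[of \<phi> x, OF mono[OF x] le])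
      qed
    qed
    also have "\<dots> \<le> ennreal Cc * (\<integral>\<^sup>+x. ennreal (\<phi> x (\<bar>f x\<bar> / c)) \<partial>M)"
      using fm c by (intro coreK) auto
    also have "(\<integral>\<^sup>+x. ennreal (\<phi> x (\<bar>f x\<bar> / c)) \<partial>M) = MO_modular M \<phi> (\<lambda>x. f x / c)"
      unfolding MO_modular_def using c by simp
    finally show ?thesis .
  qed
  define B where "B = max 2 ((Cc * Cl) powr (1 / p))"
  have B1: "B > 1" by (simp add: B_def)
  have BpC: "Cc * Cl \<le> B powr p"
  proof -
    have "Cc * Cl = ((Cc * Cl) powr (1 / p)) powr p" using Cc Cl p0 by (simp add: powr_powr)
    also have "\<dots> \<le> B powr p" using p0 by (intro powr_mono2) (auto simp: B_def)
    finally show ?thesis .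
  qed
  have small: "Cc * (Cl * (1 / B) powr p) \<le> 1"
  proof -
    have e: "B powr p * (1 / B) powr p = 1" using B1 by (simp add: powr_mult[symmetric])
    have "Cc * (Cl * (1 / B) powr p) = (Cc * Cl) * (1 / B) powr p" by simp
    also have "\<dots> \<le> B powr p * (1 / B) powr p" using BpC by (rule mult_right_mono) simp
    finally show ?thesis using e by simp
  qed
  have modMf: "MO_modular M \<phi> (\<lambda>x. enn2real (doob_max M F f x) / c) \<le> (\<integral>\<^sup>+x. phi_ext \<phi> x (doob_max M F f x * ennreal (1 / c)) \<partial>M)"
    if c: "c > 0" for f c
    unfolding MO_modular_def
  proof (rule nn_integral_mono)
    fix x
    show "ennreal (\<phi> x \<bar>enn2real (doob_max M F f x) / c\<bar>) \<le> phi_ext \<phi> x (doob_max M F f x * ennreal (1 / c))"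
    proof (cases "doob_max M F f x = \<infinity>")
      case True
      then show ?thesis using c by (simp add: phi_ext_def ennreal_mult_top)
    next
      case False
      then obtain d where d: "doob_max M F f x = ennreal d" "d \<ge> 0" by (cases "doob_max M F f x" rule: ennreal_cases) auto
      have "doob_max M F f x * ennreal (1 / c) = ennreal (d / c)" using d c by (simp add: ennreal_mult[symmetric])
      then show ?thesis using d c by (simp add: phi_ext_def)
    qed
  qed
  have lowmod: "MO_modular M \<phi> (\<lambda>x. f x / (B * c)) \<le> ennreal (Cl * (1 / B) powr p) * MO_modular M \<phi> (\<lambda>x. f x / c)"
    if c: "c > 0" for f c
  proof -
    have "MO_modular M \<phi> (\<lambda>x. f x / (B * c)) \<le> (\<integral>\<^sup>+x. ennreal (Cl * (1 / B) powr p) * ennreal (\<phi> x \<bar>f x / c\<bar>) \<partial>M)"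
      unfolding MO_modular_def
    proof (rule nn_integral_mono)
      fix x assume x: "x \<in> space M"
      have eq: "\<bar>f x / (B * c)\<bar> = (1 / B) * \<bar>f x / c\<bar>" using B1 c by (simp add: abs_mult field_simps)
      have "\<phi> x \<bar>f x / (B * c)\<bar> \<le> Cl * (1 / B) powr p * \<phi> x \<bar>f x / c\<bar>"
        unfolding eq using B1 by (intro low[OF x]) auto
      then have "ennreal (\<phi> x \<bar>f x / (B * c)\<bar>) \<le> ennreal (Cl * (1 / B) powr p * \<phi> x \<bar>f x / c\<bar>)"
        by (rule ennreal_leI)
      also have "\<dots> = ennreal (Cl * (1 / B) powr p) * ennreal (\<phi> x \<bar>f x / c\<bar>)"
        using Cl nonneg[OF x, of "\<bar>f x / c\<bar>"] by (intro ennreal_mult) auto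
      finally show "ennreal (\<phi> x \<bar>f x / (B * c)\<bar>) \<le> ennreal (Cl * (1 / B) powr p) * ennreal (\<phi> x \<bar>f x / c\<bar>)" .
    qed
    also have "\<dots> \<le> ennreal (Cl * (1 / B) powr p) * MO_modular M \<phi> (\<lambda>x. f x / c)"
      unfolding MO_modular_def using Cl B1 by (intro nn_cmult_le) simp
    finally show ?thesis .
  qed
  have keyL: "MO_modular M \<phi> (\<lambda>x. enn2real (doob_max M F f x) / (B * c)) \<le> 1"
    if fm: "f \<in> borel_measurable M" and c: "c > 0" and m1: "MO_modular M \<phi> (\<lambda>x. f x / c) \<le> 1" for f c
  proof -
    have Bc: "B * c > 0" using B1 c by simp
    have "MO_modular M \<phi> (\<lambda>x. enn2real (doob_max M F f x) / (B * c)) \<le> (\<integral>\<^sup>+x. phi_ext \<phi> x (doob_max M F f x * ennreal (1 / (B * c))) \<partial>M)"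
      by (rule modMf[OF Bc])
    also have "\<dots> \<le> ennreal Cc * MO_modular M \<phi> (\<lambda>x. f x / (B * c))" by (rule scaled[OF fm Bc])
    also have "\<dots> \<le> ennreal Cc * (ennreal (Cl * (1 / B) powr p) * MO_modular M \<phi> (\<lambda>x. f x / c))"
      by (intro mult_left_mono lowmod[OF c]) simp
    also have "\<dots> \<le> ennreal Cc * (ennreal (Cl * (1 / B) powr p) * 1)"
      by (intro mult_left_mono m1) simp_all
    also have "\<dots> = ennreal (Cc * (Cl * (1 / B) powr p))"
      using Cc Cl by (simp add: ennreal_mult)
    also have "\<dots> \<le> 1" using small by (simp add: ennreal_le_1)
    finally show ?thesis .
  qed
  show ?thesis
  proof (intro exI[of _ "max Cc B"] conjI allI impI)
    show "max Cc B > 0" using Cc by simp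
    fix f assume inL: "in_L_phi M \<phi> f"
    then have fm[measurable]: "f \<in> borel_measurable M" unfolding in_L_phi_def by simp
    obtain c0 where c0: "c0 > 0" and m0: "MO_modular M \<phi> (\<lambda>x. f x / c0) \<le> 1"
      using inL unfolding in_L_phi_def by blast
    have Dm[measurable]: "(\<lambda>x. doob_max M F f x) \<in> borel_measurable M"
      unfolding doob_max_def by measurable
    show "AE x in M. doob_max M F f x < \<infinity>"
    proof -
      define N where "N = {x\<in>space M. doob_max M F f x * ennreal (1 / c0) = \<infinity>}"
      have Nm: "N \<in> sets M" unfolding N_def by measurable
      have "\<infinity> * emeasure M N = (\<integral>\<^sup>+x. \<infinity> * indicator N x \<partial>M)"
        by (rule nn_integral_cmult_indicator[symmetric, OF Nm])
      also have "\<dots> \<le> (\<integral>\<^sup>+x. phi_ext \<phi> x (doob_max M F f x * ennreal (1 / c0)) \<partial>M)"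
        by (intro nn_integral_mono) (auto simp: N_def phi_ext_def indicator_def)
      also have "\<dots> \<le> ennreal Cc * MO_modular M \<phi> (\<lambda>x. f x / c0)" by (rule scaled[OF fm c0])
      also have "\<dots> \<le> ennreal Cc * 1" by (intro mult_left_mono m0) simp
      finally have le: "\<infinity> * emeasure M N \<le> ennreal Cc" by simp
      have lt: "\<infinity> * emeasure M N < \<top>" using le_less_trans[OF le ennreal_less_top] .
      have "emeasure M N = 0"
      proof (rule ccontr)
        assume "emeasure M N \<noteq> 0"
        then have "\<infinity> * emeasure M N = \<top>" by (simp add: ennreal_mult_eq_top_iff)
        then show False using lt by simp
      qed
      then have "N \<in> null_sets M" using Nm by auto
      then have "AE x in M. x \<notin> N" by (rule AE_not_in)
      then show ?thesis
      proof (rule AE_mp, intro AE_I2 impI)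
        fix x assume "x \<in> space M" "x \<notin> N"
        then have "doob_max M F f x * ennreal (1 / c0) \<noteq> \<infinity>" by (simp add: N_def)
        then have "doob_max M F f x \<noteq> \<infinity>" using c0 by (auto simp: ennreal_mult_top)
        then show "doob_max M F f x < \<infinity>" by (simp add: less_top)
      qed
    qed
    have inS: "B * c \<in> {c. c > 0 \<and> MO_modular M \<phi> (\<lambda>x. enn2real (doob_max M F f x) / c) \<le> 1}"
      if "c \<in> {c. c > 0 \<and> MO_modular M \<phi> (\<lambda>x. f x / c) \<le> 1}" for c
      using that keyL[OF fm] B1 by auto
    show "in_L_phi M \<phi> (\<lambda>x. enn2real (doob_max M F f x))"
      unfolding in_L_phi_def
    proof (intro conjI)
      show "(\<lambda>x. enn2real (doob_max M F f x)) \<in> borel_measurable M" by measurable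
      show "\<exists>c>0. MO_modular M \<phi> (\<lambda>x. enn2real (doob_max M F f x) / c) \<le> 1"
        using inS[of c0] c0 m0 by blast
    qed
    show "L_phi_norm M \<phi> (\<lambda>x. enn2real (doob_max M F f x)) \<le> max Cc B * L_phi_norm M \<phi> f"
    proof -
      define Sf where "Sf = {c. c > 0 \<and> MO_modular M \<phi> (\<lambda>x. f x / c) \<le> 1}"
      define SM where "SM = {c. c > 0 \<and> MO_modular M \<phi> (\<lambda>x. enn2real (doob_max M F f x) / c) \<le> 1}"
      have ne: "Sf \<noteq> {}" using c0 m0 by (auto simp: Sf_def)
      have bdd: "bdd_below SM" by (rule bdd_belowI[of _ 0]) (auto simp: SM_def)
      have "Inf SM / B \<le> c" if "c \<in> Sf" for c
      proof -
        have "Inf SM \<le> B * c" using inS[of c] that bdd unfolding Sf_def SM_def by (intro cInf_lower) auto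
        then show ?thesis using B1 by (simp add: field_simps)
      qed
      then have "Inf SM / B \<le> Inf Sf" using ne by (intro cInf_greatest) auto
      then have "Inf SM \<le> B * Inf Sf" using B1 by (simp add: field_simps)
      moreover have "Inf Sf \<ge> 0" using ne by (intro cInf_greatest) (auto simp: Sf_def)
      ultimately have "Inf SM \<le> max Cc B * Inf Sf"
        by (meson max.cobounded2 mult_right_mono order_trans)
      then show ?thesis unfolding L_phi_norm_def Sf_def SM_def .
    qed
    have "(\<integral>\<^sup>+ x. phi_ext \<phi> x (doob_max M F f x) \<partial>M) \<le> ennreal Cc * MO_modular M \<phi> (\<lambda>x. f x / 1)"
      using scaled[OF fm, of 1] by simp
    also have "\<dots> = ennreal Cc * MO_modular M \<phi> f" by simp
    also have "\<dots> \<le> ennreal (max Cc B) * MO_modular M \<phi> f"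
      by (intro mult_right_mono ennreal_leI) auto
    finally show "(\<integral>\<^sup>+ x. phi_ext \<phi> x (doob_max M F f x) \<partial>M) \<le> ennreal (max Cc B) * MO_modular M \<phi> f" .
  qed
qed

end
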